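(* Let $x_*$ be a feasible point of problem $(\mathcal{P})$. Then: (1) a Lagrange multiplier of $(\mathcal{P})$ at $x_*$ exists if and only if there exists $c\ge0$ such that $0\in\partial\Phi_c(x_* )+N_A(x_* )$; (2) the following are equivalent: (a) $\max_{\omega\in W(x_* )}\langle\nabla_xf(x_*,\omega),h\rangle>0$ for all $h\in T_A(x_* )\setminus\{0\}$ with $DG(x_* )h\in T_K(G(x_* ))$; (b) there exists $c\ge0$ such that $0\in\operatorname{int}(\partial\Phi_c(x_* )+N_A(x_* ))$; (c) there exists $c\ge0$ such that $\Phi_c$ satisfies the first order growth condition on $A$ at $x_*$; (3) if $x_*$ is a locally optimal solution of $(\mathcal{P})$ at which Robinson's constraint qualification holds, then the penalty function $\Phi_c$ is locally exact at $x_*$; moreover, if Robinson's constraint qualification holds at $x_*$, then the first order growth condition for $(\mathcal{P})$ holds at $x_*$ if and only if $\Phi_c$ satisfies the first order growth condition on $A$ at $x_*$ (for some $c\ge0$).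
   Context: Standing setting: $A\subseteq\mathbb{R}^d$ nonempty closed convex; $Y$ real Banach space with dual $Y^*$, pairing $\langle\cdot,\cdot\rangle$, norm $\|\cdot\|$; $K\subset Y$ nonempty closed convex cone; $W$ compact Hausdorff space; $f:\mathbb{R}^d\times W\to\mathbb{R}$ differentiable in $x$ for each $\omega$ with $f,\nabla_xf$ jointly continuous; $G:\mathbb{R}^d\to Y$ continuously Fréchet differentiable. $F(x)=\max_\omega f(x,\omega)$, $W(x)=\{\omega:f(x,\omega)=F(x)\}$, $\partial F(x)=\operatorname{co}\{\nabla_xf(x,\omega):\omega\in W(x)\}$. Problem $(\mathcal{P})$: minimise $F(x)$ s.t. $G(x)\in K$, $x\in A$; feasible set $\Omega$. Contingent cone $T_C(x)$: set of $h$ with $\alpha_n\downarrow0$, $h_n\to h$, $x+\alpha_nh_n\in C$; $N_A(x)=\{z:\langle z,v\rangle\le0\ \forall v\in T_A(x)\}$. $K^*=\{y^*:\langle y^*,y\rangle\le0\ \forall y\in K\}$. Lagrange multiplier at feasible $x_*$: $\lambda_*\in K^*$ with $\langle\lambda_*,G(x_* )\rangle=0$ and $[L(\cdot,\lambda_* )]'(x_*,h)\ge0$ for all $h\in T_A(x_* )$, where $L(x,\lambda)=F(x)+\langle\lambda,G(x)\rangle$. Robinson's constraint qualification at $x_*$: $0\in\operatorname{int}\{G(x_* )+DG(x_* )(A-x_* )-K\}$. Penalty function $\Phi_c(x)=F(x)+c\operatorname{dist}(G(x),K)$, $c\ge0$; for $x$ with $G(x)\in K$, $\partial\Phi_c(x)=\partial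 F(x)+c\{[DG(x)]^*y^*:y^*\in Y^*,\|y^*\|\le1,\langle y^*,y-G(x)\rangle\le0\ \forall y\in K\}$, where $[T]^*y^*\in\mathbb{R}^d$ is defined by $\langle[T]^*y^*,h\rangle=\langle y^*,Th\rangle$. $\Phi_c$ is locally exact at a locally optimal solution $x_*$ if there is $c_*\ge0$ such that $x_*$ is a local minimiser of $\Phi_c$ on $A$ for all $c\ge c_*$. First order growth for $(\mathcal{P})$ at $x_*$: $\exists\rho>0$, neighbourhood $\mathcal{O}$, $F(x)\ge F(x_* )+\rho|x-x_*|$ on $\mathcal{O}\cap\Omega$. $\Phi_c$ satisfies the first order growth condition on $A$ at $x_*$ if $\exists\rho>0$, neighbourhood $\mathcal{O}$, with $\Phi_c(x)\ge\Phi_c(x_* )+\rho|x-x_*|$ for all $x\in\mathcal{O}\cap A$. *)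

theory Defs
  imports "HOL-Analysis.Analysis"
begin

definition contingent_cone :: "'a::real_normed_vector set \<Rightarrow> 'a \<Rightarrow> 'a set" where
  "contingent_cone C x = {h. \<exists>(\<alpha>::nat \<Rightarrow> real) hs. (\<forall>n. \<alpha> n > 0) \<and> \<alpha> \<longlonglongrightarrow> 0 \<and>
      hs \<longlonglongrightarrow> h \<and> (\<forall>n. x + \<alpha> n *\<^sub>R hs n \<in> C)}"

definition normal_cone :: "'a::euclidean_space set \<Rightarrow> 'a \<Rightarrow> 'a set" where
  "normal_cone A x = {z. \<forall>v\<in>contingent_cone A x. z \<bullet> v \<le> 0}"

definition polar_cone :: "'b::real_normed_vector set \<Rightarrow> ('b \<Rightarrow>\<^sub>L real) set" where
  "polar_cone K = {y. \<forall>k\<in>K. blinfun_apply y k \<le> 0}"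

definition maxfun :: "('a \<Rightarrow> 'w \<Rightarrow> real) \<Rightarrow> 'w set \<Rightarrow> 'a \<Rightarrow> real" where
  "maxfun f W x = (SUP \<omega>\<in>W. f x \<omega>)"

definition active_set :: "('a \<Rightarrow> 'w \<Rightarrow> real) \<Rightarrow> 'w set \<Rightarrow> 'a \<Rightarrow> 'w set" where
  "active_set f W x = {\<omega>\<in>W. f x \<omega> = maxfun f W x}"

definition subdiff_max ::
  "('a::euclidean_space \<Rightarrow> 'w \<Rightarrow> real) \<Rightarrow> ('a \<Rightarrow> 'w \<Rightarrow> 'a) \<Rightarrow> 'w set \<Rightarrow> 'a \<Rightarrow> 'a set" where
  "subdiff_max f gf W x = convex hull (gf x ` active_set f W x)"

definition dir_deriv :: "('a::real_normed_vector \<Rightarrow> real) \<Rightarrow> 'a \<Rightarrow> 'a \<Rightarrow> real" where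
  "dir_deriv g x h = Lim (at_right 0) (\<lambda>t. (g (x + t *\<^sub>R h) - g x) / t)"

definition lagrangian ::
  "('a \<Rightarrow> 'w \<Rightarrow> real) \<Rightarrow> 'w set \<Rightarrow> ('a \<Rightarrow> 'b::real_normed_vector) \<Rightarrow> ('b \<Rightarrow>\<^sub>L real) \<Rightarrow> 'a \<Rightarrow> real" where
  "lagrangian f W G lam x = maxfun f W x + blinfun_apply lam (G x)"

definition is_lagrange_multiplier ::
  "('a::euclidean_space \<Rightarrow> 'w \<Rightarrow> real) \<Rightarrow> 'w set \<Rightarrow> 'a set \<Rightarrow> ('a \<Rightarrow> 'b::real_normed_vector)
    \<Rightarrow> 'b set \<Rightarrow> 'a \<Rightarrow> ('b \<Rightarrow>\<^sub>L real) \<Rightarrow> bool" where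
  "is_lagrange_multiplier f W A G K xs lam \<longleftrightarrow>
     lam \<in> polar_cone K \<and> blinfun_apply lam (G xs) = 0 \<and>
     (\<forall>h\<in>contingent_cone A xs. dir_deriv (lagrangian f W G lam) xs h \<ge> 0)"

text \<open>[T]^* y*: the vector in R^d with <[T]^* y*, h> = y*(T h).\<close>
definition adjoint_vec :: "('a::euclidean_space \<Rightarrow>\<^sub>L 'b::real_normed_vector) \<Rightarrow> ('b \<Rightarrow>\<^sub>L real) \<Rightarrow> 'a" where
  "adjoint_vec T y = (\<Sum>b\<in>Basis. blinfun_apply y (blinfun_apply T b) *\<^sub>R b)"

definition penalty ::
  "('a \<Rightarrow> 'w \<Rightarrow> real) \<Rightarrow> 'w set \<Rightarrow> ('a \<Rightarrow> 'b::metric_space) \<Rightarrow> 'b set \<Rightarrow> real \<Rightarrow> 'a \<Rightarrow> real" where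
  "penalty f W G K c x = maxfun f W x + c * infdist (G x) K"

text \<open>Subdifferential of Phi_c at a feasible point, as given by the paper's formula.\<close>
definition subdiff_penalty ::
  "('a::euclidean_space \<Rightarrow> 'w \<Rightarrow> real) \<Rightarrow> ('a \<Rightarrow> 'w \<Rightarrow> 'a) \<Rightarrow> 'w set \<Rightarrow> ('a \<Rightarrow> 'b::real_normed_vector)
    \<Rightarrow> ('a \<Rightarrow> ('a \<Rightarrow>\<^sub>L 'b)) \<Rightarrow> 'b set \<Rightarrow> real \<Rightarrow> 'a \<Rightarrow> 'a set" where
  "subdiff_penalty f gf W G DG K c x =
     {u + c *\<^sub>R adjoint_vec (DG x) y | u y. u \<in> subdiff_max f gf W x \<and> norm y \<le> 1 \<and>
        (\<forall>k\<in>K. blinfun_apply y (k - G x) \<le> 0)}"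

definition minkowski_sum :: "'a::ab_group_add set \<Rightarrow> 'a set \<Rightarrow> 'a set" where
  "minkowski_sum S T = {s + t | s t. s \<in> S \<and> t \<in> T}"

definition local_min_on :: "('a::metric_space \<Rightarrow> real) \<Rightarrow> 'a set \<Rightarrow> 'a \<Rightarrow> bool" where
  "local_min_on g S x \<longleftrightarrow> (\<exists>\<epsilon>>0. \<forall>y\<in>S \<inter> ball x \<epsilon>. g x \<le> g y)"

definition first_order_growth_on :: "('a::real_normed_vector \<Rightarrow> real) \<Rightarrow> 'a set \<Rightarrow> 'a \<Rightarrow> bool" where
  "first_order_growth_on g S x \<longleftrightarrow>
     (\<exists>\<rho>>0. \<exists>U. open U \<and> x \<in> U \<and> (\<forall>y\<in>U \<inter> S. g y \<ge> g x + \<rho> * norm (y - x)))"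

definition robinson_cq ::
  "'a set \<Rightarrow> ('a::real_normed_vector \<Rightarrow> 'b::real_normed_vector) \<Rightarrow> ('a \<Rightarrow> ('a \<Rightarrow>\<^sub>L 'b)) \<Rightarrow> 'b set \<Rightarrow> 'a \<Rightarrow> bool" where
  "robinson_cq A G DG K xs \<longleftrightarrow>
     0 \<in> interior {G xs + blinfun_apply (DG xs) (a - xs) - k | a k. a \<in> A \<and> k \<in> K}"

end

theory Submission
  imports Defs "HOL-Analysis.Analysis"
begin


definition lingraph :: "('b::real_vector \<Rightarrow> real) \<Rightarrow> ('b \<times> real) set \<Rightarrow> bool" where
 "lingraph p H \<longleftrightarrow> (0,0) \<in> H \<and> (\<forall>x a y b. (x,a)\<in>H \<longrightarrow> (y,b)\<in>H \<longrightarrow> (x+y, a+b) \<in> H)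
   \<and> (\<forall>x a t. (x,a)\<in>H \<longrightarrow> (t *\<^sub>R x, t*a) \<in> H) \<and> (\<forall>x a b. (x,a)\<in>H \<longrightarrow> (x,b)\<in>H \<longrightarrow> a = b)
   \<and> (\<forall>x a. (x,a) \<in> H \<longrightarrow> a \<le> p x)"

lemma lingraphD:
  assumes "lingraph p H"
  shows "(0,0) \<in> H" "\<And>x a y b. (x,a)\<in>H \<Longrightarrow> (y,b)\<in>H \<Longrightarrow> (x+y, a+b) \<in> H"
   "\<And>x a t. (x,a)\<in>H \<Longrightarrow> (t *\<^sub>R x, t*a) \<in> H" "\<And>x a b. (x,a)\<in>H \<Longrightarrow> (x,b)\<in>H \<Longrightarrow> a = b"
   "\<And>x a. (x,a) \<in> H \<Longrightarrow> a \<le> p x"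
  using assms unfolding lingraph_def by blast+

lemma hahn_banach_sublinear:
  fixes p :: "'b::real_vector \<Rightarrow> real" and v :: 'b
  assumes padd: "\<And>x y. p (x + y) \<le> p x + p y"
    and pscale: "\<And>t x. t \<ge> 0 \<Longrightarrow> p (t *\<^sub>R x) = t * p x"
  shows "\<exists>F. linear F \<and> (\<forall>x. F x \<le> p x) \<and> F v = p v"
proof -
  have p0: "p 0 = 0" using pscale[of 0 v] by simp
  define H0 where "H0 = {(t *\<^sub>R v, t * p v) | t. True}"
  have H0: "lingraph p H0"
    unfolding lingraph_def
  proof (intro conjI allI impI)
    show "(0,0) \<in> H0" unfolding H0_def by (auto intro!: exI[of _ 0])
    fix x a y b assume "(x,a) \<in> H0" "(y,b) \<in> H0"
    then obtain t s where "x = t *\<^sub>R v" "a = t * p v" "y = s *\<^sub>R v" "b = s * p v" unfolding H0_def by auto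
    then show "(x+y, a+b) \<in> H0" unfolding H0_def
      by (auto intro!: exI[of _ "t+s"] simp: scaleR_add_left distrib_right)
  next
    fix x a t assume "(x,a) \<in> H0"
    then obtain s where "x = s *\<^sub>R v" "a = s * p v" unfolding H0_def by auto
    then show "(t *\<^sub>R x, t*a) \<in> H0" unfolding H0_def by (auto intro!: exI[of _ "t * s"])
  next
    fix x a b assume "(x,a) \<in> H0" "(x,b) \<in> H0"
    then obtain t s where ts: "x = t *\<^sub>R v" "a = t * p v" "x = s *\<^sub>R v" "b = s * p v" unfolding H0_def by blast
    show "a = b"
    proof (cases "v = 0")
      case True then show ?thesis using ts p0 by simp
    next
      case False then have "t = s" using ts by (metis scaleR_cancel_right)
      then show ?thesis using ts by simp
    qed
  next
    fix x a assume "(x,a) \<in> H0"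
    then obtain t where ts: "x = t *\<^sub>R v" "a = t * p v" unfolding H0_def by auto
    show "a \<le> p x"
    proof (cases "t \<ge> 0")
      case True then show ?thesis using ts pscale by simp
    next
      case False
      have "0 \<le> p (t *\<^sub>R v) + p ((-t) *\<^sub>R v)" using padd[of "t *\<^sub>R v" "(-t) *\<^sub>R v"] p0
        by (simp add: scaleR_add_left[symmetric])
      then show ?thesis using ts pscale[of "-t" v] False by simp
    qed
  qed
  define \<A> where "\<A> = {H. lingraph p H \<and> H0 \<subseteq> H}"
  have "\<exists>M\<in>\<A>. \<forall>X\<in>\<A>. M \<subseteq> X \<longrightarrow> X = M"
  proof (rule Zorn_Lemma2, intro ballI)
    fix C assume C: "C \<in> chains \<A>"
    show "\<exists>U\<in>\<A>. \<forall>X\<in>C. X \<subseteq> U"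
    proof (cases "C = {}")
      case True then show ?thesis using H0 unfolding \<A>_def by auto
    next
      case False
      have CA: "C \<subseteq> \<A>" using C by (simp add: chains_def)
      have ch: "\<And>X Y. X \<in> C \<Longrightarrow> Y \<in> C \<Longrightarrow> X \<subseteq> Y \<or> Y \<subseteq> X" using C chainsD by blast
      have lg: "\<And>X. X \<in> C \<Longrightarrow> lingraph p X" using CA unfolding \<A>_def by auto
      have "lingraph p (\<Union>C)"
        unfolding lingraph_def
      proof (intro conjI allI impI)
        show "(0,0) \<in> \<Union>C" using False lg lingraphD(1) by blast
        fix x a y b assume "(x,a) \<in> \<Union>C" "(y,b) \<in> \<Union>C"
        then obtain X Y where XY: "X \<in> C" "Y \<in> C" "(x,a) \<in> X" "(y,b) \<in> Y" by auto
        from ch[OF XY(1,2)] show "(x+y, a+b) \<in> \<Union>C"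
        proof
          assume "X \<subseteq> Y" then show ?thesis using XY lingraphD(2)[OF lg[OF XY(2)]] by blast
        next
          assume "Y \<subseteq> X" then show ?thesis using XY lingraphD(2)[OF lg[OF XY(1)]] by blast
        qed
      next
        fix x a t assume "(x,a) \<in> \<Union>C"
        then show "(t *\<^sub>R x, t*a) \<in> \<Union>C" using lg lingraphD(3) by blast
      next
        fix x a b assume "(x,a) \<in> \<Union>C" "(x,b) \<in> \<Union>C"
        then obtain X Y where XY: "X \<in> C" "Y \<in> C" "(x,a) \<in> X" "(x,b) \<in> Y" by auto
        from ch[OF XY(1,2)] show "a = b"
        proof
          assume "X \<subseteq> Y" then show ?thesis using XY lingraphD(4)[OF lg[OF XY(2)]] by blast
        next
          assume "Y \<subseteq> X" then show ?thesis using XY lingraphD(4)[OF lg[OF XY(1)]] by blast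
        qed
      next
        fix x a assume "(x,a) \<in> \<Union>C"
        then show "a \<le> p x" using lg lingraphD(5) by blast
      qed
      moreover have "H0 \<subseteq> \<Union>C" using False CA unfolding \<A>_def by auto
      ultimately show ?thesis unfolding \<A>_def by auto
    qed
  qed
  then obtain H where HA: "H \<in> \<A>" and Hmax: "\<And>X. X \<in> \<A> \<Longrightarrow> H \<subseteq> X \<Longrightarrow> X = H" by blast
  have lgH: "lingraph p H" and H0H: "H0 \<subseteq> H" using HA unfolding \<A>_def by auto
  have H00: "(0,0) \<in> H" and Hadd: "\<And>x a y b. (x,a)\<in>H \<Longrightarrow> (y,b)\<in>H \<Longrightarrow> (x+y, a+b) \<in> H"
    and Hsc: "\<And>x a t. (x,a)\<in>H \<Longrightarrow> (t *\<^sub>R x, t*a) \<in> H"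
    and Hfun: "\<And>x a b. (x,a)\<in>H \<Longrightarrow> (x,b)\<in>H \<Longrightarrow> a = b"
    and Hdom: "\<And>x a. (x,a)\<in>H \<Longrightarrow> a \<le> p x"
    using lingraphD[OF lgH] by blast+
  have total: "\<exists>a. (z,a) \<in> H" for z
  proof (rule ccontr)
    assume nz: "\<not> (\<exists>a. (z,a) \<in> H)"
    define S where "S = {a - p (x - z) | x a. (x,a) \<in> H}"
    define c where "c = Sup S"
    have ub: "s \<le> p (x' + z) - a'" if "s \<in> S" "(x',a') \<in> H" for s x' a'
    proof -
      obtain x a where xa: "s = a - p (x - z)" "(x,a) \<in> H" using \<open>s \<in> S\<close> unfolding S_def by auto
      have "a + a' \<le> p (x + x')" using Hdom[OF Hadd[OF xa(2) that(2)]] .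
      also have "\<dots> \<le> p (x - z) + p (x' + z)" using padd[of "x - z" "x' + z"] by simp
      finally show ?thesis using xa by simp
    qed
    have Sne: "S \<noteq> {}" using H00 unfolding S_def by auto
    have bdd: "bdd_above S" using ub H00 unfolding bdd_above_def by blast
    have c1: "a - p (x - z) \<le> c" if "(x,a) \<in> H" for x a
      unfolding c_def using that bdd by (auto intro!: cSup_upper simp: S_def)
    have c2: "c \<le> p (x + z) - a" if "(x,a) \<in> H" for x a
      unfolding c_def using that Sne ub by (auto intro!: cSup_least)
    define H' where "H' = {(x + t *\<^sub>R z, a + t * c) | x a t. (x,a) \<in> H}"
    have H'mem: "(x,a) \<in> H' \<longleftrightarrow> (\<exists>x1 a1 t. x = x1 + t *\<^sub>R z \<and> a = a1 + t * c \<and> (x1,a1) \<in> H)" for x a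
      unfolding H'_def by blast
    have "lingraph p H'"
      unfolding lingraph_def
    proof (intro conjI allI impI)
      show "(0,0) \<in> H'" unfolding H'_def using H00 by (auto intro!: exI[of _ 0])
      fix x a y b assume "(x,a) \<in> H'" "(y,b) \<in> H'"
      then obtain x1 a1 t1 x2 a2 t2 where e: "x = x1 + t1 *\<^sub>R z" "a = a1 + t1 * c" "(x1,a1) \<in> H"
        "y = x2 + t2 *\<^sub>R z" "b = a2 + t2 * c" "(x2,a2) \<in> H" unfolding H'_def by auto
      show "(x+y, a+b) \<in> H'" unfolding H'_def
        by (rule CollectI, rule exI[of _ "x1+x2"], rule exI[of _ "a1+a2"], rule exI[of _ "t1+t2"])
          (auto simp: e Hadd algebra_simps)
    next
      fix x a t assume "(x,a) \<in> H'"
      then obtain x1 a1 t1 where e: "x = x1 + t1 *\<^sub>R z" "a = a1 + t1 * c" "(x1,a1) \<in> H"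
        unfolding H'_def by auto
      show "(t *\<^sub>R x, t*a) \<in> H'" unfolding H'_def
        by (rule CollectI, rule exI[of _ "t *\<^sub>R x1"], rule exI[of _ "t*a1"], rule exI[of _ "t*t1"])
          (insert Hsc[OF e(3), of t], auto simp: e algebra_simps)
    next
      fix x a b assume xa: "(x,a) \<in> H'" and xb: "(x,b) \<in> H'"
      obtain x1 a1 t1 where e1: "x = x1 + t1 *\<^sub>R z" "a = a1 + t1 * c" "(x1,a1) \<in> H"
        using xa H'mem by blast
      obtain x2 a2 t2 where e2: "x = x2 + t2 *\<^sub>R z" "b = a2 + t2 * c" "(x2,a2) \<in> H"
        using xb H'mem by blast
      note e = e1 e2
      have "t1 = t2"
      proof (rule ccontr)
        assume ne: "t1 \<noteq> t2"
        have "(x1 + (-1) *\<^sub>R x2, a1 + (-1)*a2) \<in> H" using Hadd[OF e(3) Hsc[OF e(6)]] .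
        then have "((1/(t2 - t1)) *\<^sub>R (x1 + (-1) *\<^sub>R x2), (1/(t2-t1)) * (a1 + (-1)*a2)) \<in> H" by (rule Hsc)
        moreover have "(1/(t2 - t1)) *\<^sub>R (x1 + (-1) *\<^sub>R x2) = z"
        proof -
          have "x1 - x2 = (t2 - t1) *\<^sub>R z" using e(1,4) by (simp add: algebra_simps)
          then show ?thesis using ne by simp
        qed
        ultimately show False using nz by auto
      qed
      then have "x1 = x2" using e by simp
      then have "a1 = a2" using Hfun e by blast
      then show "a = b" using e \<open>t1 = t2\<close> by simp
    next
      fix x a assume "(x,a) \<in> H'"
      then obtain x1 a1 t where e: "x = x1 + t *\<^sub>R z" "a = a1 + t * c" "(x1,a1) \<in> H"
        unfolding H'_def by auto
      consider "t = 0" | "t > 0" | "t < 0" by linarith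
      then show "a \<le> p x"
      proof cases
        case 1 then show ?thesis using e Hdom by simp
      next
        case 2
        have h: "c \<le> p ((1/t) *\<^sub>R x1 + z) - (1/t) * a1" using c2 Hsc[OF e(3)] by blast
        have "t * c \<le> t * (p ((1/t) *\<^sub>R x1 + z) - (1/t) * a1)"
          using mult_left_mono[OF h] 2 by simp
        also have "\<dots> = t * p ((1/t) *\<^sub>R x1 + z) - a1" using 2 by (simp add: right_diff_distrib)
        finally have "t * c \<le> t * p ((1/t) *\<^sub>R x1 + z) - a1" .
        also have "t * p ((1/t) *\<^sub>R x1 + z) = p (t *\<^sub>R ((1/t) *\<^sub>R x1 + z))" using pscale 2 by simp
        also have "t *\<^sub>R ((1/t) *\<^sub>R x1 + z) = x1 + t *\<^sub>R z" using 2 by (simp add: scaleR_add_right)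
        finally show ?thesis using e by simp
      next
        case 3
        define s where "s = -t"
        have s: "s > 0" using 3 s_def by simp
        have h: "(1/s) * a1 - p ((1/s) *\<^sub>R x1 - z) \<le> c" using c1 Hsc[OF e(3)] by blast
        have "s * ((1/s) * a1 - p ((1/s) *\<^sub>R x1 - z)) \<le> s * c"
          using mult_left_mono[OF h] s by simp
        moreover have "s * ((1/s) * a1 - p ((1/s) *\<^sub>R x1 - z)) = a1 - s * p ((1/s) *\<^sub>R x1 - z)"
          using s by (simp add: right_diff_distrib)
        ultimately have "a1 - s * p ((1/s) *\<^sub>R x1 - z) \<le> s * c" by simp
        also have "s * p ((1/s) *\<^sub>R x1 - z) = p (s *\<^sub>R ((1/s) *\<^sub>R x1 - z))" using pscale s by simp
        also have "s *\<^sub>R ((1/s) *\<^sub>R x1 - z) = x1 + t *\<^sub>R z" using s s_def by (simp add: scaleR_diff_right)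
        finally show ?thesis using e s_def by simp
      qed
    qed
    moreover have "H \<subseteq> H'"
    proof
      fix q assume "q \<in> H"
      then obtain x a where "q = (x,a)" "(x,a) \<in> H" by (cases q) auto
      then show "q \<in> H'" unfolding H'_def by (intro CollectI exI[of _ x] exI[of _ a] exI[of _ 0]) simp
    qed
    ultimately have "H' \<in> \<A>" using H0H unfolding \<A>_def by auto
    then have "H' = H" using Hmax \<open>H \<subseteq> H'\<close> by blast
    moreover have "(z, c) \<in> H'" unfolding H'_def using H00 by (intro CollectI exI[of _ 0] exI[of _ "0::real"] exI[of _ 1]) simp
    ultimately show False using nz by auto
  qed
  define F where "F z = (THE a. (z,a) \<in> H)" for z
  have FH: "(z, F z) \<in> H" for z
    unfolding F_def using total[of z] Hfun by (metis theI)
  have Fu: "(z, a) \<in> H \<Longrightarrow> F z = a" for z a using FH Hfun by blast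
  have "linear F"
    by (rule linearI) (auto intro!: Fu Hadd Hsc FH)
  moreover have "\<forall>x. F x \<le> p x" using FH Hdom by blast
  moreover have "F v = p v" using H0H by (intro Fu) (auto simp: H0_def intro!: exI[of _ 1])
  ultimately show ?thesis by blast
qed


lemma infdist_lessE:
  assumes "infdist x S < d" "S \<noteq> {}"
  obtains a where "a \<in> S" "dist x a < d"
  using assms that by (auto simp: infdist_notempty cINF_less_iff)

lemma infdist_geI:
  assumes "S \<noteq> {}" "\<And>a. a \<in> S \<Longrightarrow> d \<le> dist x a"
  shows "d \<le> infdist x S"
  using assms by (auto simp: infdist_notempty intro!: cINF_greatest)

lemma hb_cone_sep:
  fixes C :: "'b::real_normed_vector set"
  assumes C0: "0 \<in> C" and Cadd: "\<And>x y. x\<in>C \<Longrightarrow> y\<in>C \<Longrightarrow> x + y \<in> C"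
    and Csc: "\<And>t x. t \<ge> 0 \<Longrightarrow> x \<in> C \<Longrightarrow> t *\<^sub>R x \<in> C" and v: "v \<notin> closure C"
  shows "\<exists>y::'b \<Rightarrow>\<^sub>L real. norm y \<le> 1 \<and> (\<forall>c\<in>C. blinfun_apply y c \<le> 0) \<and> blinfun_apply y v > 0"
proof -
  define p where "p x = infdist x C" for x
  have Cne: "C \<noteq> {}" using C0 by auto
  have padd: "p (x + y) \<le> p x + p y" for x y
  proof (rule field_le_epsilon)
    fix e :: real assume e: "e > 0"
    obtain c1 where c1: "c1 \<in> C" "dist x c1 < p x + e/2"
      using infdist_lessE[of x C "p x + e/2", OF _ Cne] e unfolding p_def by auto
    obtain c2 where c2: "c2 \<in> C" "dist y c2 < p y + e/2"
      using infdist_lessE[of y C "p y + e/2", OF _ Cne] e unfolding p_def by auto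
    have "p (x + y) \<le> dist (x + y) (c1 + c2)" unfolding p_def using Cadd[OF c1(1) c2(1)] by (rule infdist_le)
    also have "\<dots> \<le> dist x c1 + dist y c2"
      by (simp add: dist_norm norm_triangle_ineq[of "x - c1" "y - c2", simplified algebra_simps] algebra_simps)
    finally show "p (x + y) \<le> p x + p y + e" using c1 c2 by simp
  qed
  have pscale: "p (t *\<^sub>R x) = t * p x" if t: "t \<ge> 0" for t x
  proof (cases "t = 0")
    case True then show ?thesis using C0 by (simp add: p_def)
  next
    case False
    then have t0: "t > 0" using t by simp
    show ?thesis
    proof (rule antisym)
      show "p (t *\<^sub>R x) \<le> t * p x"
      proof -
        have "t * p x \<ge> p (t *\<^sub>R x)"
        proof -
          have "p x \<ge> p (t *\<^sub>R x) / t"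
            unfolding p_def
          proof (rule infdist_geI[OF Cne])
            fix c assume "c \<in> C"
            have "infdist (t *\<^sub>R x) C \<le> dist (t *\<^sub>R x) (t *\<^sub>R c)"
              by (rule infdist_le, rule Csc[OF t \<open>c \<in> C\<close>])
            also have "\<dots> = t * dist x c" using t by (simp add: dist_norm scaleR_diff_right[symmetric])
            finally show "infdist (t *\<^sub>R x) C / t \<le> dist x c" using t0 by (simp add: divide_le_eq mult.commute)
          qed
          then show ?thesis using t0 by (simp add: divide_le_eq mult.commute)
        qed
        then show ?thesis by simp
      qed
    next
      have "p (t *\<^sub>R x) \<ge> t * p x"
        unfolding p_def
      proof (rule infdist_geI[OF Cne])
        fix c assume "c \<in> C"
        have "infdist x C \<le> dist x ((1/t) *\<^sub>R c)"
          by (rule infdist_le, rule Csc) (use t0 \<open>c \<in> C\<close> in auto)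
        also have "dist x ((1/t) *\<^sub>R c) = dist (t *\<^sub>R x) c / t"
        proof -
          have "t *\<^sub>R x - c = t *\<^sub>R (x - (1/t) *\<^sub>R c)" using t0 by (simp add: scaleR_diff_right)
          then show ?thesis using t0 by (simp add: dist_norm)
        qed
        finally show "t * infdist x C \<le> dist (t *\<^sub>R x) c" using t0 by (simp add: le_divide_eq mult.commute)
      qed
      then show "t * p x \<le> p (t *\<^sub>R x)" .
    qed
  qed
  obtain F where F: "linear F" "\<And>x. F x \<le> p x" "F v = p v"
    using hahn_banach_sublinear[of p v, OF padd pscale] by blast
  have pn: "p x \<le> norm x" for x unfolding p_def using infdist_le[OF C0, of x] by simp
  have Fb: "norm (F x) \<le> 1 * norm x" for x
  proof -
    have "F x \<le> norm x" using F(2) pn order_trans by blast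
    moreover have "- F x \<le> norm x" using F(2)[of "-x"] pn[of "-x"] linear_neg[OF F(1)] by simp
    ultimately show ?thesis by simp
  qed
  have bl: "bounded_linear F"
    using F(1) Fb by (auto intro!: bounded_linear_intro[where K=1] simp: linear_add linear_scale)
  define y where "y = Blinfun F"
  have ya: "blinfun_apply y = F" unfolding y_def using bl by (simp add: bounded_linear_Blinfun_apply)
  have "norm y \<le> 1" by (rule norm_blinfun_bound) (use Fb ya in auto)
  moreover have "\<forall>c\<in>C. blinfun_apply y c \<le> 0" using F(2) ya unfolding p_def by (metis infdist_zero)
  moreover have "blinfun_apply y v > 0"
  proof -
    have "infdist v C \<noteq> 0" using v in_closure_iff_infdist_zero[OF Cne] by auto
    then show ?thesis using ya F(3) infdist_nonneg[of v C] unfolding p_def by simp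
  qed
  ultimately show ?thesis by blast
qed

definition cone_of :: "'a::real_normed_vector set \<Rightarrow> 'a \<Rightarrow> 'a set" where
  "cone_of C x = {t *\<^sub>R (c - x) | t c. 0 \<le> t \<and> c \<in> C}"

lemma cone_of_mem: "c \<in> C \<Longrightarrow> 0 \<le> t \<Longrightarrow> t *\<^sub>R (c - x) \<in> cone_of C x"
  unfolding cone_of_def by blast

lemma cone_of_0: "x \<in> C \<Longrightarrow> 0 \<in> cone_of C x"
  using cone_of_mem[of x C 0 x] by simp

lemma cone_of_scale:
  assumes "w \<in> cone_of C x" "s \<ge> 0" shows "s *\<^sub>R w \<in> cone_of C x"
proof -
  obtain t c where "w = t *\<^sub>R (c - x)" "0 \<le> t" "c \<in> C" using assms unfolding cone_of_def by blast
  then show ?thesis using cone_of_mem[of c C "s * t" x] assms by simp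
qed

lemma cone_of_add:
  assumes "convex C" "w1 \<in> cone_of C x" "w2 \<in> cone_of C x" "x \<in> C"
  shows "w1 + w2 \<in> cone_of C x"
proof -
  obtain t1 c1 where 1: "w1 = t1 *\<^sub>R (c1 - x)" "0 \<le> t1" "c1 \<in> C" using assms unfolding cone_of_def by blast
  obtain t2 c2 where 2: "w2 = t2 *\<^sub>R (c2 - x)" "0 \<le> t2" "c2 \<in> C" using assms unfolding cone_of_def by blast
  show ?thesis
  proof (cases "t1 + t2 = 0")
    case True then have "t1 = 0" "t2 = 0" using 1 2 by auto
    then show ?thesis using 1 2 cone_of_0[OF assms(4)] by simp
  next
    case False
    then have tp: "t1 + t2 > 0" using 1 2 by simp
    define c where "c = (t1/(t1+t2)) *\<^sub>R c1 + (t2/(t1+t2)) *\<^sub>R c2"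
    have "c \<in> C" unfolding c_def using assms(1) 1 2 tp
      by (intro convexD) (auto simp: add_divide_distrib[symmetric])
    moreover have "w1 + w2 = (t1 + t2) *\<^sub>R (c - x)"
    proof -
      have e: "(t1 + t2) *\<^sub>R c = t1 *\<^sub>R c1 + t2 *\<^sub>R c2" unfolding c_def using tp
        by (simp add: scaleR_add_right)
      have "(t1 + t2) *\<^sub>R (c - x) = (t1 + t2) *\<^sub>R c - (t1 + t2) *\<^sub>R x" by (rule scaleR_diff_right)
      also have "\<dots> = t1 *\<^sub>R (c1 - x) + t2 *\<^sub>R (c2 - x)" unfolding e
        by (simp add: scaleR_diff_right scaleR_add_left)
      finally show ?thesis using 1 2 by simp
    qed
    ultimately show ?thesis using cone_of_mem[of c C "t1+t2" x] tp by simp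
  qed
qed

lemma convex_cone_of: "convex C \<Longrightarrow> x \<in> C \<Longrightarrow> convex (cone_of C x)"
  by (rule convexI, intro cone_of_add cone_of_scale) auto

lemma contingent_cone_eq:
  fixes C :: "'a::real_normed_vector set"
  assumes "convex C" "x \<in> C"
  shows "contingent_cone C x = closure (cone_of C x)"
proof
  show "contingent_cone C x \<subseteq> closure (cone_of C x)"
  proof
    fix h assume "h \<in> contingent_cone C x"
    then obtain \<alpha> :: "nat \<Rightarrow> real" and hs where h: "\<forall>n. \<alpha> n > 0" "hs \<longlonglongrightarrow> h" "\<forall>n. x + \<alpha> n *\<^sub>R hs n \<in> C"
      unfolding contingent_cone_def by blast
    have "hs n \<in> cone_of C x" for n
    proof -
      have "hs n = (1 / \<alpha> n) *\<^sub>R ((x + \<alpha> n *\<^sub>R hs n) - x)" using h(1)[rule_format, of n] by simp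
      then show ?thesis using cone_of_mem[OF h(3)[rule_format, of n], of "1 / \<alpha> n" x] h(1) by (simp add: less_imp_le)
    qed
    then show "h \<in> closure (cone_of C x)" using h(2) closure_sequential by blast
  qed
next
  show "closure (cone_of C x) \<subseteq> contingent_cone C x"
  proof
    fix h assume "h \<in> closure (cone_of C x)"
    then obtain w where w: "\<And>n. w n \<in> cone_of C x" "w \<longlonglongrightarrow> h" using closure_sequential by blast
    have "\<forall>n. \<exists>t c. w n = t *\<^sub>R (c - x) \<and> 0 \<le> t \<and> c \<in> C" using w(1) unfolding cone_of_def by blast
    then obtain t c where tc: "\<And>n. w n = t n *\<^sub>R (c n - x)" "\<And>n. 0 \<le> t n" "\<And>n. c n \<in> C" by metis
    define \<alpha> where "\<alpha> n = inverse (real (Suc n)) * inverse (t n + 1)" for n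
    have ap: "\<alpha> n > 0" for n unfolding \<alpha>_def using tc(2)[of n] by (simp add: add_nonneg_pos)
    have "\<alpha> \<longlonglongrightarrow> 0"
    proof (rule Lim_null_comparison[OF _ LIMSEQ_inverse_real_of_nat])
      show "\<forall>\<^sub>F n in sequentially. norm (\<alpha> n) \<le> inverse (real (Suc n))"
      proof (intro always_eventually allI)
        fix n
        have "inverse (t n + 1) \<le> 1" using tc(2)[of n] by (simp add: inverse_le_1_iff)
        then show "norm (\<alpha> n) \<le> inverse (real (Suc n))" using ap[of n] unfolding \<alpha>_def
          by (simp add: mult_left_le)
      qed
    qed
    moreover have "x + \<alpha> n *\<^sub>R w n \<in> C" for n
    proof -
      define l where "l = \<alpha> n * t n"
      have l0: "0 \<le> l" unfolding l_def using ap[of n] tc(2)[of n] by simp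
      have l1: "l \<le> 1"
      proof -
        have "t n * inverse (t n + 1) \<le> 1" using tc(2)[of n] by (simp add: field_simps)
        moreover have "inverse (real (Suc n)) \<le> 1" by (simp add: inverse_le_1_iff)
        moreover have "0 \<le> t n * inverse (t n + 1)" using tc(2)[of n] by simp
        ultimately have "inverse (real (Suc n)) * (t n * inverse (t n + 1)) \<le> 1"
          by (metis mult_le_one)
        then show ?thesis unfolding l_def \<alpha>_def by (simp add: ac_simps)
      qed
      have "x + \<alpha> n *\<^sub>R w n = (1 - l) *\<^sub>R x + l *\<^sub>R c n"
        unfolding tc(1) l_def by (simp add: algebra_simps)
      also have "\<dots> \<in> C" using assms(1) assms(2) tc(3) l0 l1 by (intro convexD) auto
      finally show ?thesis .
    qed
    ultimately show "h \<in> contingent_cone C x" unfolding contingent_cone_def using ap w(2) by blast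
  qed
qed


lemma unif_cont_compact:
  fixes g :: "'a::metric_space \<Rightarrow> 'w::topological_space \<Rightarrow> 'c::metric_space"
  assumes cont: "continuous_on (UNIV \<times> W) (\<lambda>p. g (fst p) (snd p))" and W: "compact W" and e: "e > 0"
  shows "\<exists>d>0. \<forall>x \<omega>. dist x x0 < d \<longrightarrow> \<omega> \<in> W \<longrightarrow> dist (g x \<omega>) (g x0 \<omega>) < e"
proof -
  have "\<forall>\<omega>\<in>W. \<exists>r>0. \<exists>V. open V \<and> \<omega> \<in> V \<and> (\<forall>x \<omega>'. dist x x0 < r \<longrightarrow> \<omega>' \<in> V \<longrightarrow> \<omega>' \<in> W \<longrightarrow> dist (g x \<omega>') (g x0 \<omega>) < e/2)"
  proof
    fix \<omega> assume \<omega>: "\<omega> \<in> W"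
    have "(x0,\<omega>) \<in> UNIV \<times> W" using \<omega> by simp
    from cont[unfolded continuous_on_topological, rule_format, OF this, of "ball (g x0 \<omega>) (e/2)"] e
    obtain Op where Op: "open Op" "(x0,\<omega>) \<in> Op" "\<And>p. p \<in> UNIV \<times> W \<Longrightarrow> p \<in> Op \<Longrightarrow> g (fst p) (snd p) \<in> ball (g x0 \<omega>) (e/2)"
      by auto
    obtain U V where UV: "open U" "open V" "(x0,\<omega>) \<in> U \<times> V" "U \<times> V \<subseteq> Op"
      using open_prod_elim[OF Op(1,2)] by blast
    obtain r where r: "r > 0" "ball x0 r \<subseteq> U" using UV(1,3) open_contains_ball by blast
    show "\<exists>r>0. \<exists>V. open V \<and> \<omega> \<in> V \<and> (\<forall>x \<omega>'. dist x x0 < r \<longrightarrow> \<omega>' \<in> V \<longrightarrow> \<omega>' \<in> W \<longrightarrow> dist (g x \<omega>') (g x0 \<omega>) < e/2)"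
    proof (intro exI[of _ r] conjI exI[of _ V] allI impI)
      fix x \<omega>' assume "dist x x0 < r" "\<omega>' \<in> V" "\<omega>' \<in> W"
      then have "(x,\<omega>') \<in> Op" using r UV by (auto simp: dist_commute)
      then show "dist (g x \<omega>') (g x0 \<omega>) < e/2" using Op(3)[of "(x,\<omega>')"] \<open>\<omega>' \<in> W\<close> by (simp add: dist_commute)
    qed (use r UV in auto)
  qed
  then obtain r V where rV: "\<And>\<omega>. \<omega> \<in> W \<Longrightarrow> r \<omega> > 0 \<and> open (V \<omega>) \<and> \<omega> \<in> V \<omega> \<and>
      (\<forall>x \<omega>'. dist x x0 < r \<omega> \<longrightarrow> \<omega>' \<in> V \<omega> \<longrightarrow> \<omega>' \<in> W \<longrightarrow> dist (g x \<omega>') (g x0 \<omega>) < e/2)"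
    by metis
  obtain F where F: "F \<subseteq> W" "finite F" "W \<subseteq> (\<Union>c\<in>F. V c)"
    using compactE_image[OF W, of W V] rV by blast
  define d where "d = Min (insert 1 (r ` F))"
  have d0: "d > 0" unfolding d_def using F rV by (subst Min_gr_iff) auto
  have dr: "d \<le> r c" if "c \<in> F" for c unfolding d_def using F that by (intro Min_le) auto
  show ?thesis
  proof (intro exI[of _ d] conjI allI impI d0)
    fix x \<omega> assume x: "dist x x0 < d" and \<omega>: "\<omega> \<in> W"
    then obtain c where c: "c \<in> F" "\<omega> \<in> V c" using F by blast
    have cW: "c \<in> W" using c F by auto
    have 1: "dist (g x \<omega>) (g x0 c) < e/2" using rV[OF cW] x dr[OF c(1)] c \<omega> by auto
    have 2: "dist (g x0 \<omega>) (g x0 c) < e/2" using rV[OF cW] c \<omega> by auto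
    show "dist (g x \<omega>) (g x0 \<omega>) < e"
      using dist_triangle2[of "g x \<omega>" "g x0 \<omega>" "g x0 c"] 1 2 by simp
  qed
qed

lemma adjoint_vec_inner:
  "adjoint_vec T y \<bullet> h = blinfun_apply y (blinfun_apply T h)"
proof -
  have "blinfun_apply y (blinfun_apply T h) = blinfun_apply y (blinfun_apply T (\<Sum>b\<in>Basis. (h \<bullet> b) *\<^sub>R b))"
    by (simp add: euclidean_representation)
  also have "\<dots> = (\<Sum>b\<in>Basis. (h \<bullet> b) * blinfun_apply y (blinfun_apply T b))"
    by (simp add: blinfun.sum_right blinfun.scaleR_right)
  also have "\<dots> = (\<Sum>b\<in>Basis. blinfun_apply y (blinfun_apply T b) * (b \<bullet> h))"
    by (rule sum.cong) (auto simp: inner_commute)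
  also have "\<dots> = adjoint_vec T y \<bullet> h"
    unfolding adjoint_vec_def by (simp add: inner_sum_left)
  finally show ?thesis by simp
qed

lemma tendsto_at_right0I:
  fixes q :: "real \<Rightarrow> real"
  assumes "\<And>e. e > 0 \<Longrightarrow> \<exists>d>0. \<forall>t. 0 < t \<longrightarrow> t < d \<longrightarrow> \<bar>q t - L\<bar> \<le> e"
  shows "(q \<longlongrightarrow> L) (at_right 0)"
proof (rule tendstoI)
  fix e :: real assume e: "e > 0"
  obtain d where d: "d > 0" "\<And>t. 0 < t \<Longrightarrow> t < d \<Longrightarrow> \<bar>q t - L\<bar> \<le> e/2" using assms[of "e/2"] e by auto
  have "\<forall>t. 0 < t \<longrightarrow> t < d \<longrightarrow> dist (q t) L < e" using d e by (force simp: dist_real_def)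
  then show "\<forall>\<^sub>F t in at_right 0. dist (q t) L < e"
    unfolding eventually_at_right[OF d(1)] using d by blast
qed

locale setting =
  fixes A :: "'a::euclidean_space set" and K :: "'b::banach set" and W :: "'w::t2_space set"
    and f :: "'a \<Rightarrow> 'w \<Rightarrow> real" and gf :: "'a \<Rightarrow> 'w \<Rightarrow> 'a"
    and G :: "'a \<Rightarrow> 'b" and DG :: "'a \<Rightarrow> ('a \<Rightarrow>\<^sub>L 'b)" and xs :: 'a
  assumes A: "A \<noteq> {}" "closed A" "convex A"
    and K: "K \<noteq> {}" "closed K" "convex K" "cone K"
    and W: "W \<noteq> {}" "compact W"
    and f_diff: "\<And>\<omega> x. \<omega> \<in> W \<Longrightarrow> ((\<lambda>x. f x \<omega>) has_derivative (\<lambda>h. gf x \<omega> \<bullet> h)) (at x)"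
    and f_cont: "continuous_on (UNIV \<times> W) (\<lambda>p. f (fst p) (snd p))"
    and gf_cont: "continuous_on (UNIV \<times> W) (\<lambda>p. gf (fst p) (snd p))"
    and G_diff: "\<And>x. (G has_derivative blinfun_apply (DG x)) (at x)"
    and DG_cont: "continuous_on UNIV DG"
    and feas: "xs \<in> A" "G xs \<in> K"
begin

abbreviation "Fs \<equiv> maxfun f W xs"
abbreviation "Ws \<equiv> active_set f W xs"
abbreviation "L \<equiv> blinfun_apply (DG xs)"
abbreviation "y0 \<equiv> G xs"
abbreviation "F \<equiv> maxfun f W"

lemma fW_cont: "continuous_on W (\<lambda>\<omega>. f x \<omega>)"
proof -
  have "continuous_on W ((\<lambda>p. f (fst p) (snd p)) \<circ> (\<lambda>\<omega>. (x,\<omega>)))"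
    by (rule continuous_on_compose, intro continuous_intros, rule continuous_on_subset[OF f_cont]) auto
  then show ?thesis by (simp add: o_def)
qed

lemma gfW_cont: "continuous_on W (\<lambda>\<omega>. gf x \<omega>)"
proof -
  have "continuous_on W ((\<lambda>p. gf (fst p) (snd p)) \<circ> (\<lambda>\<omega>. (x,\<omega>)))"
    by (rule continuous_on_compose, intro continuous_intros, rule continuous_on_subset[OF gf_cont]) auto
  then show ?thesis by (simp add: o_def)
qed

lemma f_bdd: "bdd_above ((\<lambda>\<omega>. f x \<omega>) ` W)"
  by (rule bounded_imp_bdd_above, rule compact_imp_bounded, rule compact_continuous_image[OF fW_cont W(2)])

lemma f_le_F: "\<omega> \<in> W \<Longrightarrow> f x \<omega> \<le> F x"
  unfolding maxfun_def by (rule cSUP_upper[OF _ f_bdd])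

lemma F_le: "(\<And>\<omega>. \<omega> \<in> W \<Longrightarrow> f x \<omega> \<le> c) \<Longrightarrow> F x \<le> c"
  unfolding maxfun_def using W(1) by (rule cSUP_least)

lemma F_attained: "\<exists>\<omega>\<in>W. f x \<omega> = F x"
proof -
  obtain \<omega> where "\<omega> \<in> W" "\<forall>\<omega>'\<in>W. f x \<omega>' \<le> f x \<omega>"
    using continuous_attains_sup[OF W(2) W(1) fW_cont] by blast
  then show ?thesis using f_le_F[of \<omega> x] F_le[of x "f x \<omega>"] by force
qed

lemma Ws_sub: "Ws \<subseteq> W" unfolding active_set_def by auto

lemma Ws_ne: "Ws \<noteq> {}" using F_attained[of xs] unfolding active_set_def by auto

lemma Ws_compact: "compact Ws"
  unfolding active_set_def
  by (rule closedin_compact[OF W(2)], rule continuous_closedin_preimage_constant[OF fW_cont])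

lemma Ws_iff: "\<omega> \<in> Ws \<longleftrightarrow> \<omega> \<in> W \<and> f xs \<omega> = Fs" unfolding active_set_def by auto

lemma gf_bound: "\<exists>B>0. \<forall>\<omega>\<in>W. norm (gf xs \<omega>) \<le> B"
  using compact_imp_bounded[OF compact_continuous_image[OF gfW_cont W(2)]] unfolding bounded_pos by auto

definition "Bg = (SOME B. B > 0 \<and> (\<forall>\<omega>\<in>W. norm (gf xs \<omega>) \<le> B))"

lemma Bg: "Bg > 0" "\<omega> \<in> W \<Longrightarrow> norm (gf xs \<omega>) \<le> Bg"
  using someI_ex[OF gf_bound[unfolded Bex_def]] unfolding Bg_def by auto

definition M :: "'a \<Rightarrow> real" where "M h = (SUP \<omega>\<in>Ws. gf xs \<omega> \<bullet> h)"

lemma gf_inner_le: "\<omega> \<in> W \<Longrightarrow> \<bar>gf xs \<omega> \<bullet> h\<bar> \<le> Bg * norm h"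
  using Cauchy_Schwarz_ineq2[of "gf xs \<omega>" h] Bg(2)[of \<omega>] by (meson mult_right_mono norm_ge_zero order_trans)

lemma M_bdd: "bdd_above ((\<lambda>\<omega>. gf xs \<omega> \<bullet> h) ` Ws)"
  by (rule bdd_aboveI2[where M="Bg * norm h"]) (use gf_inner_le Ws_sub in \<open>force simp: abs_le_iff\<close>)

lemma M_upper: "\<omega> \<in> Ws \<Longrightarrow> gf xs \<omega> \<bullet> h \<le> M h"
  unfolding M_def by (rule cSUP_upper[OF _ M_bdd])

lemma M_least: "(\<And>\<omega>. \<omega> \<in> Ws \<Longrightarrow> gf xs \<omega> \<bullet> h \<le> c) \<Longrightarrow> M h \<le> c"
  unfolding M_def using Ws_ne by (rule cSUP_least)

lemma M_approx: "e > 0 \<Longrightarrow> \<exists>\<omega>\<in>Ws. M h - e < gf xs \<omega> \<bullet> h"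
  unfolding M_def using Ws_ne M_bdd by (subst less_cSUP_iff[symmetric]) auto

lemma M_abs: "\<bar>M h\<bar> \<le> Bg * norm h"
proof -
  obtain \<omega> where "\<omega> \<in> Ws" using Ws_ne by auto
  then have "- (Bg * norm h) \<le> M h" using M_upper[of \<omega> h] gf_inner_le[of \<omega> h] Ws_sub by force
  moreover have "M h \<le> Bg * norm h" using gf_inner_le Ws_sub by (intro M_least) (force simp: abs_le_iff)
  ultimately show ?thesis by simp
qed

lemma M_lip: "M h \<le> M h' + Bg * norm (h - h')"
proof (rule M_least)
  fix \<omega> assume "\<omega> \<in> Ws"
  have "gf xs \<omega> \<bullet> h = gf xs \<omega> \<bullet> h' + gf xs \<omega> \<bullet> (h - h')" by (simp add: inner_diff_right)
  also have "\<dots> \<le> M h' + Bg * norm (h - h')"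
    using M_upper[OF \<open>\<omega> \<in> Ws\<close>, of h'] gf_inner_le[of \<omega> "h - h'"] \<open>\<omega> \<in> Ws\<close> Ws_sub by force
  finally show "gf xs \<omega> \<bullet> h \<le> M h' + Bg * norm (h - h')" .
qed

lemma M_lip_abs: "\<bar>M h - M h'\<bar> \<le> Bg * norm (h - h')"
  using M_lip[of h h'] M_lip[of h' h] by (simp add: norm_minus_commute)

lemma M_cont: "continuous_on S M"
proof (rule continuous_on_subset[of UNIV], unfold continuous_on_iff, intro ballI allI impI)
  fix x and e :: real assume "e > 0"
  show "\<exists>d>0. \<forall>x'\<in>UNIV. dist x' x < d \<longrightarrow> dist (M x') (M x) < e"
  proof (intro exI[of _ "e / Bg"] conjI ballI impI)
    fix x' assume "dist x' x < e / Bg"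
    then have "Bg * norm (x' - x) < e" using Bg(1) by (simp add: dist_norm field_simps)
    then show "dist (M x') (M x) < e" using M_lip_abs[of x' x] by (simp add: dist_real_def)
  qed (use \<open>e > 0\<close> Bg(1) in auto)
qed auto

lemma M_scale: assumes "t \<ge> 0" shows "M (t *\<^sub>R h) = t * M h"
proof (cases "t = 0")
  case True
  then show ?thesis using M_abs[of 0] by simp
next
  case False
  then have t: "t > 0" using assms by simp
  show ?thesis
  proof (rule antisym)
    show "M (t *\<^sub>R h) \<le> t * M h"
      by (rule M_least) (use M_upper t in \<open>simp add: mult_left_mono less_imp_le\<close>)
    have "M h \<le> M (t *\<^sub>R h) / t"
    proof (rule M_least)
      fix \<omega> assume "\<omega> \<in> Ws"
      then have "gf xs \<omega> \<bullet> (t *\<^sub>R h) \<le> M (t *\<^sub>R h)" by (rule M_upper)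
      then show "gf xs \<omega> \<bullet> h \<le> M (t *\<^sub>R h) / t" using t by (simp add: le_divide_eq mult.commute)
    qed
    then show "t * M h \<le> M (t *\<^sub>R h)" using t by (simp add: le_divide_eq mult.commute)
  qed
qed

abbreviation "P \<equiv> subdiff_max f gf W xs"

lemma P_le: "u \<in> P \<Longrightarrow> u \<bullet> h \<le> M h"
proof -
  assume u: "u \<in> P"
  have "P \<subseteq> {u. h \<bullet> u \<le> M h}"
    unfolding subdiff_max_def
    apply (rule hull_minimal)
    subgoal using M_upper by (auto simp: inner_commute)
    subgoal by (rule convex_halfspace_le)
    done
  then show ?thesis using u by (auto simp: inner_commute)
qed

lemma P_mem: "\<omega> \<in> Ws \<Longrightarrow> gf xs \<omega> \<in> P"
  unfolding subdiff_max_def by (rule hull_inc) simp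

lemma P_ne: "P \<noteq> {}" using P_mem Ws_ne by blast

lemma P_compact: "compact P"
  unfolding subdiff_max_def
  by (intro compact_convex_hull compact_continuous_image Ws_compact continuous_on_subset[OF gfW_cont Ws_sub])

lemma P_convex: "convex P" unfolding subdiff_max_def by (rule convex_convex_hull)

end


context setting begin

lemma gf_unif: "e > 0 \<Longrightarrow> \<exists>d>0. \<forall>x \<omega>. norm (x - xs) < d \<longrightarrow> \<omega> \<in> W \<longrightarrow> norm (gf x \<omega> - gf xs \<omega>) < e"
  using unif_cont_compact[OF gf_cont W(2), of e xs] by (simp add: dist_norm)

lemma f_lin:
  assumes e: "e > 0"
  shows "\<exists>d>0. \<forall>x \<omega>. norm (x - xs) < d \<longrightarrow> \<omega> \<in> W \<longrightarrow>
           \<bar>f x \<omega> - f xs \<omega> - gf xs \<omega> \<bullet> (x - xs)\<bar> \<le> e * norm (x - xs)"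
proof -
  obtain d where d: "d > 0" "\<And>x \<omega>. norm (x - xs) < d \<Longrightarrow> \<omega> \<in> W \<Longrightarrow> norm (gf x \<omega> - gf xs \<omega>) < e"
    using gf_unif[OF e] by blast
  show ?thesis
  proof (intro exI[of _ d] conjI allI impI d(1))
    fix x \<omega> assume x: "norm (x - xs) < d" and \<omega>: "\<omega> \<in> W"
    define \<phi> where "\<phi> y = f y \<omega> - gf xs \<omega> \<bullet> y" for y
    have der: "(\<phi> has_derivative (\<lambda>h. (gf y \<omega> - gf xs \<omega>) \<bullet> h)) (at y within ball xs d)" for y
    proof -
      have "((\<lambda>y. f y \<omega> - gf xs \<omega> \<bullet> y) has_derivative (\<lambda>h. gf y \<omega> \<bullet> h - gf xs \<omega> \<bullet> h)) (at y)"
        by (intro has_derivative_diff f_diff[OF \<omega>] bounded_linear.has_derivative[OF bounded_linear_inner_right] has_derivative_ident)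
      then show ?thesis unfolding \<phi>_def by (simp add: inner_diff_left has_derivative_at_withinI)
    qed
    have "norm (\<phi> x - \<phi> xs) \<le> e * norm (x - xs)"
    proof (rule differentiable_bound[OF convex_ball der])
      fix y assume "y \<in> ball xs d"
      then have "norm (gf y \<omega> - gf xs \<omega>) \<le> e" using d(2)[OF _ \<omega>, of y] by (simp add: dist_norm norm_minus_commute)
      then show "onorm (\<lambda>h. (gf y \<omega> - gf xs \<omega>) \<bullet> h) \<le> e"
        by (intro onorm_le) (metis Cauchy_Schwarz_ineq2 mult_right_mono norm_ge_zero order_trans real_norm_def)
    qed (use x d in \<open>auto simp: dist_norm norm_minus_commute\<close>)
    then show "\<bar>f x \<omega> - f xs \<omega> - gf xs \<omega> \<bullet> (x - xs)\<bar> \<le> e * norm (x - xs)"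
      unfolding \<phi>_def by (simp add: inner_diff_right algebra_simps)
  qed
qed

lemma gap:
  assumes e: "e > 0"
  shows "\<exists>\<eta>>0. \<forall>\<omega>\<in>W. Fs - f xs \<omega> < \<eta> \<longrightarrow> (\<exists>\<omega>'\<in>Ws. norm (gf xs \<omega> - gf xs \<omega>') < e)"
proof -
  define Ob where "Ob = (\<Union>\<omega>'\<in>Ws. ball (gf xs \<omega>') e)"
  define V where "V = W \<inter> (\<lambda>\<omega>. gf xs \<omega>) -` Ob"
  have "openin (top_of_set W) V" unfolding V_def Ob_def
    by (rule continuous_openin_preimage_gen[OF gfW_cont]) auto
  then have "closedin (top_of_set W) (W - V)" by (metis closedin_diff closedin_topspace topspace_euclidean_subtopology)
  then have cR: "compact (W - V)" by (rule closedin_compact[OF W(2)])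
  have WsV: "Ws \<subseteq> V" unfolding V_def Ob_def using Ws_sub e by force
  show ?thesis
  proof (cases "W - V = {}")
    case True
    show ?thesis
    proof (intro exI[of _ 1] conjI ballI impI)
      fix \<omega> assume "\<omega> \<in> W"
      then have "\<omega> \<in> V" using True by auto
      then show "\<exists>\<omega>'\<in>Ws. norm (gf xs \<omega> - gf xs \<omega>') < e" unfolding V_def Ob_def by (auto simp: dist_norm norm_minus_commute)
    qed simp
  next
    case False
    have "continuous_on (W - V) (\<lambda>\<omega>. Fs - f xs \<omega>)"
      by (intro continuous_intros continuous_on_subset[OF fW_cont]) auto
    then obtain \<omega>0 where \<omega>0: "\<omega>0 \<in> W - V" "\<And>\<omega>. \<omega> \<in> W - V \<Longrightarrow> Fs - f xs \<omega>0 \<le> Fs - f xs \<omega>"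
      using continuous_attains_inf[OF cR False] by blast
    have pos: "Fs - f xs \<omega>0 > 0"
    proof -
      have "f xs \<omega>0 \<le> Fs" using \<omega>0(1) f_le_F by auto
      moreover have "f xs \<omega>0 \<noteq> Fs" using \<omega>0(1) WsV Ws_iff by auto
      ultimately show ?thesis by simp
    qed
    show ?thesis
    proof (intro exI[of _ "Fs - f xs \<omega>0"] conjI ballI impI pos)
      fix \<omega> assume "\<omega> \<in> W" "Fs - f xs \<omega> < Fs - f xs \<omega>0"
      then have "\<omega> \<in> V" using \<omega>0(2)[of \<omega>] by force
      then show "\<exists>\<omega>'\<in>Ws. norm (gf xs \<omega> - gf xs \<omega>') < e" unfolding V_def Ob_def by (auto simp: dist_norm norm_minus_commute)
    qed
  qed
qed

lemma danskin:
  assumes e: "e > 0"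
  shows "\<exists>d>0. \<forall>x. norm (x - xs) < d \<longrightarrow> \<bar>F x - Fs - M (x - xs)\<bar> \<le> e * norm (x - xs)"
proof -
  define e' where "e' = e / 2"
  have e': "e' > 0" using e by (simp add: e'_def)
  obtain d1 where d1: "d1 > 0" "\<And>x \<omega>. norm (x - xs) < d1 \<Longrightarrow> \<omega> \<in> W \<Longrightarrow>
           \<bar>f x \<omega> - f xs \<omega> - gf xs \<omega> \<bullet> (x - xs)\<bar> \<le> e' * norm (x - xs)"
    using f_lin[OF e'] by blast
  obtain \<eta> where \<eta>: "\<eta> > 0" "\<And>\<omega>. \<omega> \<in> W \<Longrightarrow> Fs - f xs \<omega> < \<eta> \<Longrightarrow> (\<exists>\<omega>'\<in>Ws. norm (gf xs \<omega> - gf xs \<omega>') < e')"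
    using gap[OF e'] by blast
  define d where "d = min d1 (\<eta> / (2 * Bg + e'))"
  have d: "d > 0" unfolding d_def using d1 \<eta> Bg(1) e' by simp
  show ?thesis
  proof (intro exI[of _ d] conjI allI impI d)
    fix x assume x: "norm (x - xs) < d"
    define k where "k = x - xs"
    have xd1: "norm k < d1" using x unfolding d_def k_def by simp
    have "F x \<le> M k + e * norm k + Fs"
    proof (rule F_le)
      fix \<omega> assume \<omega>: "\<omega> \<in> W"
      have lin: "f x \<omega> \<le> f xs \<omega> + gf xs \<omega> \<bullet> k + e' * norm k" using d1(2)[OF xd1[unfolded k_def] \<omega>] unfolding k_def by linarith
      show "f x \<omega> \<le> M k + e * norm k + Fs"
      proof (cases "Fs - f xs \<omega> < \<eta>")
        case True
        then obtain \<omega>' where \<omega>': "\<omega>' \<in> Ws" "norm (gf xs \<omega> - gf xs \<omega>') < e'" using \<eta>(2)[OF \<omega>] by blast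
        have "gf xs \<omega> \<bullet> k = gf xs \<omega>' \<bullet> k + (gf xs \<omega> - gf xs \<omega>') \<bullet> k" by (simp add: inner_diff_left)
        also have "\<dots> \<le> M k + e' * norm k"
        proof -
          have "(gf xs \<omega> - gf xs \<omega>') \<bullet> k \<le> norm (gf xs \<omega> - gf xs \<omega>') * norm k" using Cauchy_Schwarz_ineq2[of "gf xs \<omega> - gf xs \<omega>'" k] by linarith
          also have "\<dots> \<le> e' * norm k" using \<omega>'(2) by (intro mult_right_mono) auto
          finally show ?thesis using M_upper[OF \<omega>'(1), of k] by simp
        qed
        finally show ?thesis using lin f_le_F[OF \<omega>, of xs] unfolding e'_def by simp
      next
        case False
        have "gf xs \<omega> \<bullet> k \<le> Bg * norm k" using gf_inner_le[OF \<omega>, of k] by simp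
        moreover have "(2 * Bg + e') * norm k \<le> \<eta>"
        proof -
          have "norm k \<le> \<eta> / (2 * Bg + e')" using x unfolding d_def k_def by simp
          then show ?thesis using Bg(1) e' by (simp add: le_divide_eq mult.commute)
        qed
        moreover have "- (Bg * norm k) \<le> M k" using M_abs[of k] by simp
        moreover have "0 \<le> e * norm k" using e by simp
        ultimately show ?thesis using lin False unfolding e'_def by (simp add: algebra_simps)
      qed
    qed
    then have upper: "F x - Fs \<le> M k + e * norm k" by simp
    have lower: "M k \<le> F x - Fs + e * norm k"
    proof (rule M_least)
      fix \<omega> assume \<omega>: "\<omega> \<in> Ws"
      then have \<omega>W: "\<omega> \<in> W" and fe: "f xs \<omega> = Fs" using Ws_iff by auto
      have "f xs \<omega> + gf xs \<omega> \<bullet> k - e' * norm k \<le> f x \<omega>" using d1(2)[OF xd1[unfolded k_def] \<omega>W] unfolding k_def by linarith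
      show "gf xs \<omega> \<bullet> k \<le> F x - Fs + e * norm k"
      proof -
        have "0 \<le> e * norm k" using e by simp
        moreover have "e / 2 * norm k = (e * norm k) / 2" by simp
        ultimately show ?thesis using \<open>f xs \<omega> + gf xs \<omega> \<bullet> k - e' * norm k \<le> f x \<omega>\<close> f_le_F[OF \<omega>W, of x] fe
          unfolding e'_def by linarith
      qed
    qed
    show "\<bar>F x - Fs - M (x - xs)\<bar> \<le> e * norm (x - xs)" using upper lower unfolding k_def by simp
  qed
qed

lemma G_lin:
  assumes e: "e > 0"
  shows "\<exists>d>0. \<forall>x x'. norm (x - xs) < d \<longrightarrow> norm (x' - xs) < d \<longrightarrow>
           norm (G x' - G x - L (x' - x)) \<le> e * norm (x' - x)"
proof -
  have "isCont DG xs" using DG_cont by (simp add: continuous_on_eq_continuous_at)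
  then obtain d where d: "d > 0" "\<And>y. dist y xs < d \<Longrightarrow> dist (DG y) (DG xs) < e"
    using e unfolding continuous_at_eps_delta by blast
  show ?thesis
  proof (intro exI[of _ d] conjI allI impI d(1))
    fix x x' assume x: "norm (x - xs) < d" and x': "norm (x' - xs) < d"
    define \<phi> where "\<phi> y = G y - L y" for y
    have der: "(\<phi> has_derivative blinfun_apply (DG y - DG xs)) (at y within ball xs d)" for y
    proof -
      have "(\<phi> has_derivative (\<lambda>h. blinfun_apply (DG y) h - L h)) (at y)"
        unfolding \<phi>_def by (intro has_derivative_diff G_diff bounded_linear.has_derivative[OF blinfun.bounded_linear_right] has_derivative_ident)
      moreover have "blinfun_apply (DG y - DG xs) = (\<lambda>h. blinfun_apply (DG y) h - L h)"
        by (rule ext) (simp add: blinfun.diff_left)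
      ultimately show ?thesis by (simp add: has_derivative_at_withinI)
    qed
    have "norm (\<phi> x' - \<phi> x) \<le> e * norm (x' - x)"
    proof (rule differentiable_bound[OF convex_ball der])
      fix y assume "y \<in> ball xs d"
      then have "norm (DG y - DG xs) \<le> e" using d(2)[of y] by (simp add: dist_norm norm_minus_commute)
      then show "onorm (blinfun_apply (DG y - DG xs)) \<le> e" by (simp add: norm_blinfun.rep_eq)
    qed (use x x' in \<open>auto simp: dist_norm norm_minus_commute\<close>)
    then show "norm (G x' - G x - L (x' - x)) \<le> e * norm (x' - x)"
      unfolding \<phi>_def by (simp add: blinfun.diff_right algebra_simps)
  qed
qed

lemma dir_deriv_lagr:
  "dir_deriv (lagrangian f W G lam) xs h = M h + blinfun_apply lam (L h)"
proof -
  let ?q = "\<lambda>t. (lagrangian f W G lam (xs + t *\<^sub>R h) - lagrangian f W G lam xs) / t"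
  have "(?q \<longlongrightarrow> M h + blinfun_apply lam (L h)) (at_right 0)"
  proof (rule tendsto_at_right0I)
    fix e :: real assume e: "e > 0"
    define X where "X = (norm h + 1) * (norm lam + 1)"
    define e' where "e' = e / (2 * X)"
    have X: "X > 0" unfolding X_def by (intro mult_pos_pos) (simp_all add: add_nonneg_pos)
    have den: "0 < 2 * X" using X by simp
    have e'0: "e' > 0" unfolding e'_def using e den by (rule divide_pos_pos)
    obtain d1 where d1: "d1 > 0" "\<And>x. norm (x - xs) < d1 \<Longrightarrow> \<bar>F x - Fs - M (x - xs)\<bar> \<le> e' * norm (x - xs)"
      using danskin[OF e'0] by blast
    obtain d2 where d2: "d2 > 0" "\<And>x x'. norm (x - xs) < d2 \<Longrightarrow> norm (x' - xs) < d2 \<Longrightarrow>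
           norm (G x' - G x - L (x' - x)) \<le> e' * norm (x' - x)"
      using G_lin[OF e'0] by blast
    define d where "d = min d1 d2 / (norm h + 1)"
    have d: "d > 0" unfolding d_def using d1(1) d2(1) by (intro divide_pos_pos) (simp_all add: add_nonneg_pos)
    show "\<exists>d>0. \<forall>t. 0 < t \<longrightarrow> t < d \<longrightarrow> \<bar>?q t - (M h + blinfun_apply lam (L h))\<bar> \<le> e"
    proof (intro exI[of _ d] conjI allI impI d)
      fix t :: real assume t: "0 < t" "t < d"
      have nt: "norm (t *\<^sub>R h) < min d1 d2"
      proof -
        have "t * norm h \<le> t * (norm h + 1)" using t by simp
        also have "\<dots> < min d1 d2"
        proof -
          have hp: "0 < norm h + 1" by (simp add: add_nonneg_pos)
          show ?thesis using t(2) unfolding d_def pos_less_divide_eq[OF hp] by simp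
        qed
        finally show ?thesis using t by simp
      qed
      have 1: "\<bar>F (xs + t *\<^sub>R h) - Fs - t * M h\<bar> \<le> e' * (t * norm h)"
        using d1(2)[of "xs + t *\<^sub>R h"] nt M_scale[of t h] t by simp
      have 2: "norm (G (xs + t *\<^sub>R h) - G xs - t *\<^sub>R L h) \<le> e' * (t * norm h)"
        using d2(2)[of xs "xs + t *\<^sub>R h"] nt d2(1) t by (simp add: blinfun.scaleR_right)
      have 3: "\<bar>blinfun_apply lam (G (xs + t *\<^sub>R h) - G xs) - t * blinfun_apply lam (L h)\<bar> \<le> norm lam * (e' * (t * norm h))"
      proof -
        have "blinfun_apply lam (G (xs + t *\<^sub>R h) - G xs) - t * blinfun_apply lam (L h)
              = blinfun_apply lam (G (xs + t *\<^sub>R h) - G xs - t *\<^sub>R L h)" by (simp add: blinfun.diff_right blinfun.scaleR_right)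
        also have "\<bar>\<dots>\<bar> \<le> norm lam * norm (G (xs + t *\<^sub>R h) - G xs - t *\<^sub>R L h)"
          using norm_blinfun[of lam] by simp
        also have "\<dots> \<le> norm lam * (e' * (t * norm h))" using 2 by (intro mult_left_mono) auto
        finally show ?thesis .
      qed
      have "?q t - (M h + blinfun_apply lam (L h)) =
          ((F (xs + t *\<^sub>R h) - Fs - t * M h) + (blinfun_apply lam (G (xs + t *\<^sub>R h) - G xs) - t * blinfun_apply lam (L h))) / t"
        using t unfolding lagrangian_def by (simp add: field_simps blinfun.diff_right)
      also have "\<bar>\<dots>\<bar> \<le> (e' * (t * norm h) + norm lam * (e' * (t * norm h))) / t"
        using 1 3 t by (simp add: divide_right_mono abs_triangle_ineq[THEN order_trans])
      also have "\<dots> = e' * norm h * (1 + norm lam)" using t by (simp add: field_simps)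
      also have "\<dots> \<le> e"
      proof -
        have "e' * norm h * (1 + norm lam) \<le> e' * X"
          using e'0 unfolding X_def by (simp add: algebra_simps mult_nonneg_nonneg)
        also have "\<dots> = e / 2" unfolding e'_def using X by (simp add: field_simps)
        finally show ?thesis using e by simp
      qed
      finally show "\<bar>?q t - (M h + blinfun_apply lam (L h))\<bar> \<le> e" .
    qed
  qed
  then show ?thesis unfolding dir_deriv_def by (rule tendsto_Lim[rotated]) simp
qed

end


lemma minkowski_eq: "minkowski_sum S T = (\<Union>x\<in>S. \<Union>y\<in>T. {x + y})"
  unfolding minkowski_sum_def by auto

lemma adjoint_vec_lin:
  "adjoint_vec T (a *\<^sub>R y1 + b *\<^sub>R y2) = a *\<^sub>R adjoint_vec T y1 + b *\<^sub>R adjoint_vec T y2"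
  unfolding adjoint_vec_def
  by (simp add: blinfun.add_left blinfun.scaleR_left scaleR_add_left sum.distrib scaleR_sum_right)

lemma adjoint_vec_0: "adjoint_vec T 0 = 0"
  unfolding adjoint_vec_def by simp

lemma adjoint_vec_scale: "adjoint_vec T (a *\<^sub>R y) = a *\<^sub>R adjoint_vec T y"
  using adjoint_vec_lin[of T a y 0 0] adjoint_vec_0 by simp

lemma contingent_cone_scale:
  assumes "v \<in> contingent_cone C x" "t \<ge> 0" "x \<in> C"
  shows "t *\<^sub>R v \<in> contingent_cone C x"
proof (cases "t = 0")
  case True
  have "0 \<in> contingent_cone C x" unfolding contingent_cone_def
    by (intro CollectI exI[of _ "\<lambda>n. inverse (real (Suc n))"] exI[of _ "\<lambda>n. 0"])
      (use assms(3) LIMSEQ_inverse_real_of_nat in auto)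
  then show ?thesis using True by simp
next
  case False
  then have t: "t > 0" using assms by simp
  obtain \<alpha> hs where h: "\<forall>n. \<alpha> n > 0" "\<alpha> \<longlonglongrightarrow> 0" "hs \<longlonglongrightarrow> v" "\<forall>n. x + \<alpha> n *\<^sub>R hs n \<in> C"
    using assms(1) unfolding contingent_cone_def by blast
  show ?thesis unfolding contingent_cone_def
  proof (intro CollectI exI[of _ "\<lambda>n. \<alpha> n / t"] exI[of _ "\<lambda>n. t *\<^sub>R hs n"] conjI allI)
    show "(\<lambda>n. \<alpha> n / t) \<longlonglongrightarrow> 0" using tendsto_divide[OF h(2) tendsto_const[of t]] t by simp
    show "(\<lambda>n. t *\<^sub>R hs n) \<longlonglongrightarrow> t *\<^sub>R v" using h(3) by (intro tendsto_intros)
    fix n show "0 < \<alpha> n / t" using h(1) t by simp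
    show "x + (\<alpha> n / t) *\<^sub>R t *\<^sub>R hs n \<in> C" using h(4) t by simp
  qed
qed

context setting begin

lemma K0: "0 \<in> K"
proof -
  obtain k where "k \<in> K" using K(1) by auto
  then show ?thesis using K(4) unfolding cone_def by (metis scaleR_zero_left order_refl)
qed

lemma Ksc: "k \<in> K \<Longrightarrow> t \<ge> 0 \<Longrightarrow> t *\<^sub>R k \<in> K" using K(4) unfolding cone_def by blast

lemma Kadd: assumes "k1 \<in> K" "k2 \<in> K" shows "k1 + k2 \<in> K"
proof -
  have "(1/2) *\<^sub>R k1 + (1/2) *\<^sub>R k2 \<in> K" using assms K(3) by (intro convexD) auto
  from Ksc[OF this, of 2] show ?thesis by (simp add: scaleR_add_right)
qed

abbreviation "TA \<equiv> contingent_cone A xs"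
abbreviation "TK \<equiv> contingent_cone K y0"
abbreviation "NA \<equiv> normal_cone A xs"

lemma TA_eq: "TA = closure (cone_of A xs)" using contingent_cone_eq[OF A(3) feas(1)] .
lemma TK_eq: "TK = closure (cone_of K y0)" using contingent_cone_eq[OF K(3) feas(2)] .

lemma TA_closed: "closed TA" unfolding TA_eq by simp
lemma TA_convex: "convex TA" unfolding TA_eq using convex_cone_of[OF A(3) feas(1)] by simp
lemma TA_0: "0 \<in> TA" unfolding TA_eq using cone_of_0[OF feas(1)] closure_subset by blast
lemma TA_sc: "v \<in> TA \<Longrightarrow> t \<ge> 0 \<Longrightarrow> t *\<^sub>R v \<in> TA" using contingent_cone_scale feas(1) by blast
lemma A_TA: "a \<in> A \<Longrightarrow> a - xs \<in> TA"
  unfolding TA_eq using cone_of_mem[of a A 1 xs] closure_subset by force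

lemma NA_le: "n \<in> NA \<Longrightarrow> v \<in> TA \<Longrightarrow> n \<bullet> v \<le> 0" unfolding normal_cone_def by auto
lemma NA_I: "(\<And>v. v \<in> TA \<Longrightarrow> n \<bullet> v \<le> 0) \<Longrightarrow> n \<in> NA" unfolding normal_cone_def by auto
lemma NA_0: "0 \<in> NA" by (rule NA_I) simp
lemma NA_sc: "n \<in> NA \<Longrightarrow> t \<ge> 0 \<Longrightarrow> t *\<^sub>R n \<in> NA"
  by (rule NA_I) (auto simp: NA_le mult_nonneg_nonpos)
lemma NA_convex: "convex NA"
  unfolding normal_cone_def
proof (rule convexI)
  fix x y u v :: real and a b :: 'a
  show "a \<in> {z. \<forall>v\<in>TA. z \<bullet> v \<le> 0} \<Longrightarrow> b \<in> {z. \<forall>v\<in>TA. z \<bullet> v \<le> 0} \<Longrightarrow> 0 \<le> u \<Longrightarrow> 0 \<le> v \<Longrightarrow> u + v = 1 \<Longrightarrow>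
    u *\<^sub>R a + v *\<^sub>R b \<in> {z. \<forall>v\<in>TA. z \<bullet> v \<le> 0}"
    by (auto simp: inner_add_left add_nonpos_nonpos mult_nonneg_nonpos)
qed
lemma NA_closed: "closed NA"
proof -
  have "NA = (\<Inter>v\<in>TA. {z. z \<bullet> v \<le> 0})" unfolding normal_cone_def by auto
  also have "\<dots> = (\<Inter>v\<in>TA. {z. v \<bullet> z \<le> 0})" by (simp add: inner_commute)
  finally show ?thesis by (metis closed_INT closed_halfspace_le)
qed

lemma bipolar:
  assumes "h \<notin> TA" shows "\<exists>n\<in>NA. n \<bullet> h > 0"
proof -
  obtain a b where ab: "a \<bullet> h < b" "\<And>x. x \<in> TA \<Longrightarrow> b < a \<bullet> x"
    using separating_hyperplane_closed_point[OF TA_convex TA_closed assms] by blast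
  have b: "b < 0" using ab(2)[OF TA_0] by simp
  have "0 \<le> a \<bullet> v" if v: "v \<in> TA" for v
  proof (rule ccontr)
    assume "\<not> 0 \<le> a \<bullet> v"
    then have neg: "a \<bullet> v < 0" by simp
    define t where "t = b / (a \<bullet> v)"
    have t: "t \<ge> 0" unfolding t_def using b neg by (simp add: divide_nonpos_neg)
    have "b < a \<bullet> (t *\<^sub>R v)" using ab(2)[OF TA_sc[OF v t]] .
    also have "\<dots> = b" unfolding t_def using neg by simp
    finally show False by simp
  qed
  then have "-a \<in> NA" by (intro NA_I) simp
  moreover have "(-a) \<bullet> h > 0" using ab(1) b by simp
  ultimately show ?thesis by blast
qed

definition "Nset = {y::'b \<Rightarrow>\<^sub>L real. norm y \<le> 1 \<and> (\<forall>k\<in>K. blinfun_apply y (k - y0) \<le> 0)}"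

lemma Nset_0: "0 \<in> Nset" unfolding Nset_def by simp

lemma Nset_y0: assumes "y \<in> Nset" shows "blinfun_apply y y0 = 0"
proof -
  have "blinfun_apply y (0 - y0) \<le> 0" using assms K0 unfolding Nset_def by blast
  moreover have "blinfun_apply y (2 *\<^sub>R y0 - y0) \<le> 0" using assms Ksc[OF feas(2), of 2] unfolding Nset_def by auto
  ultimately show ?thesis by (simp add: blinfun.diff_right blinfun.scaleR_right blinfun.minus_right)
qed

lemma Nset_K: assumes "y \<in> Nset" "k \<in> K" shows "blinfun_apply y k \<le> 0"
  using assms Nset_y0[OF assms(1)] unfolding Nset_def by (auto simp: blinfun.diff_right)

lemma Nset_norm: "y \<in> Nset \<Longrightarrow> \<bar>blinfun_apply y v\<bar> \<le> norm v"
proof -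
  assume "y \<in> Nset"
  then have "norm y \<le> 1" unfolding Nset_def by simp
  then have "norm y * norm v \<le> 1 * norm v" by (intro mult_right_mono) auto
  then show ?thesis using norm_blinfun[of y v] by simp
qed

lemma Nset_infdist: assumes "y \<in> Nset" shows "blinfun_apply y (z - y0) \<le> infdist z K"
proof (rule infdist_geI[OF K(1)])
  fix k assume k: "k \<in> K"
  have "blinfun_apply y (z - y0) = blinfun_apply y (z - k) + blinfun_apply y (k - y0)"
    by (simp add: blinfun.diff_right)
  also have "\<dots> \<le> norm (z - k)" using Nset_norm[OF assms, of "z - k"] assms k unfolding Nset_def by force
  finally show "blinfun_apply y (z - y0) \<le> dist z k" by (simp add: dist_norm)
qed

lemma Nset_convex: "convex Nset"
proof (rule convexI)
  fix y1 y2 and u v :: real assume y: "y1 \<in> Nset" "y2 \<in> Nset" "0 \<le> u" "0 \<le> v" "u + v = 1"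
  have "norm (u *\<^sub>R y1 + v *\<^sub>R y2) \<le> u * norm y1 + v * norm y2"
    using norm_triangle_ineq[of "u *\<^sub>R y1" "v *\<^sub>R y2"] y(3,4) by simp
  also have "\<dots> \<le> u * 1 + v * 1" using y unfolding Nset_def by (intro add_mono mult_left_mono) auto
  finally have "norm (u *\<^sub>R y1 + v *\<^sub>R y2) \<le> 1" using y(5) by simp
  moreover have "blinfun_apply (u *\<^sub>R y1 + v *\<^sub>R y2) (k - y0) \<le> 0" if "k \<in> K" for k
    using y that unfolding Nset_def by (auto simp: blinfun.add_left blinfun.scaleR_left intro!: add_nonpos_nonpos mult_nonneg_nonpos)
  ultimately show "u *\<^sub>R y1 + v *\<^sub>R y2 \<in> Nset" unfolding Nset_def by blast
qed

abbreviation "SP c \<equiv> subdiff_penalty f gf W G DG K c xs"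
abbreviation "Sc c \<equiv> minkowski_sum (SP c) NA"

lemma SP_iff: "s \<in> SP c \<longleftrightarrow> (\<exists>u y. s = u + c *\<^sub>R adjoint_vec (DG xs) y \<and> u \<in> P \<and> y \<in> Nset)"
  unfolding subdiff_penalty_def Nset_def by blast

lemma Sc_iff: "x \<in> Sc c \<longleftrightarrow> (\<exists>u y n. x = u + c *\<^sub>R adjoint_vec (DG xs) y + n \<and> u \<in> P \<and> y \<in> Nset \<and> n \<in> NA)"
  unfolding minkowski_sum_def SP_iff by blast

lemma SP_convex: "convex (SP c)"
proof (rule convexI)
  fix s1 s2 and a b :: real assume s: "s1 \<in> SP c" "s2 \<in> SP c" "0 \<le> a" "0 \<le> b" "a + b = 1"
  obtain u1 y1 u2 y2 where e: "s1 = u1 + c *\<^sub>R adjoint_vec (DG xs) y1" "u1 \<in> P" "y1 \<in> Nset"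
    "s2 = u2 + c *\<^sub>R adjoint_vec (DG xs) y2" "u2 \<in> P" "y2 \<in> Nset" using s(1,2) SP_iff by metis
  have "a *\<^sub>R s1 + b *\<^sub>R s2 = (a *\<^sub>R u1 + b *\<^sub>R u2) + c *\<^sub>R adjoint_vec (DG xs) (a *\<^sub>R y1 + b *\<^sub>R y2)"
    unfolding e adjoint_vec_lin by (simp add: algebra_simps)
  moreover have "a *\<^sub>R u1 + b *\<^sub>R u2 \<in> P" using P_convex e s by (intro convexD) auto
  moreover have "a *\<^sub>R y1 + b *\<^sub>R y2 \<in> Nset" using Nset_convex e s by (intro convexD) auto
  ultimately show "a *\<^sub>R s1 + b *\<^sub>R s2 \<in> SP c" using SP_iff by blast
qed

lemma Sc_convex: "convex (Sc c)"
  unfolding minkowski_eq by (intro convex_sums SP_convex NA_convex)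

lemma Sc_mem: "u \<in> P \<Longrightarrow> y \<in> Nset \<Longrightarrow> n \<in> NA \<Longrightarrow> u + c *\<^sub>R adjoint_vec (DG xs) y + n \<in> Sc c"
  using Sc_iff by blast

lemma part1:
  "(\<exists>lam. is_lagrange_multiplier f W A G K xs lam) \<longleftrightarrow> (\<exists>c\<ge>0. 0 \<in> Sc c)"
proof
  assume "\<exists>lam. is_lagrange_multiplier f W A G K xs lam"
  then obtain lam where lam: "lam \<in> polar_cone K" "blinfun_apply lam y0 = 0"
    "\<And>h. h \<in> TA \<Longrightarrow> dir_deriv (lagrangian f W G lam) xs h \<ge> 0"
    unfolding is_lagrange_multiplier_def by blast
  define av where "av = adjoint_vec (DG xs) lam"
  define S1 where "S1 = (\<Union>x\<in>(\<lambda>u. u + av) ` P. \<Union>y\<in>NA. {x + y})"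
  have cS1: "closed S1" unfolding S1_def
    by (intro compact_closed_sums NA_closed compact_continuous_image P_compact continuous_intros)
  have vS1: "convex S1"
  proof -
    have eq: "(\<lambda>u. u + av) ` P = (+) av ` P" by (auto simp: add.commute)
    show ?thesis unfolding S1_def eq by (intro convex_sums NA_convex convex_translation P_convex)
  qed
  have "0 \<in> S1"
  proof (rule ccontr)
    assume "0 \<notin> S1"
    then obtain a b where ab: "a \<bullet> 0 < b" "\<And>x. x \<in> S1 \<Longrightarrow> b < a \<bullet> x"
      using separating_hyperplane_closed_point[OF vS1 cS1] by blast
    obtain u0 where u0: "u0 \<in> P" using P_ne by auto
    have mem: "u + av + n \<in> S1" if "u \<in> P" "n \<in> NA" for u n unfolding S1_def using that by blast
    define h where "h = - a"
    have "h \<in> TA"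
    proof (rule ccontr)
      assume "h \<notin> TA"
      then obtain n where n: "n \<in> NA" "n \<bullet> h > 0" using bipolar by blast
      define t where "t = (a \<bullet> (u0 + av) - b) / (n \<bullet> h) + 1"
      have t: "t \<ge> 0"
      proof -
        have "b < a \<bullet> (u0 + av + 0)" using ab(2)[OF mem[OF u0 NA_0]] .
        then show ?thesis unfolding t_def using n(2) by simp
      qed
      have "b < a \<bullet> (u0 + av + t *\<^sub>R n)" using ab(2)[OF mem[OF u0 NA_sc[OF n(1) t]]] .
      also have "\<dots> = a \<bullet> (u0 + av) - t * (n \<bullet> h)" unfolding h_def by (simp add: inner_add_right inner_commute)
      also have "t * (n \<bullet> h) = a \<bullet> (u0 + av) - b + n \<bullet> h" unfolding t_def using n(2) by (simp add: field_simps)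
      finally show False using n(2) by simp
    qed
    have "M h + blinfun_apply lam (L h) \<ge> 0" using lam(3)[OF \<open>h \<in> TA\<close>] dir_deriv_lagr by simp
    moreover have "M h \<le> - blinfun_apply lam (L h) - b"
    proof (rule M_least)
      fix \<omega> assume "\<omega> \<in> Ws"
      have "b < a \<bullet> (gf xs \<omega> + av + 0)" using ab(2)[OF mem[OF P_mem[OF \<open>\<omega> \<in> Ws\<close>] NA_0]] .
      then show "gf xs \<omega> \<bullet> h \<le> - blinfun_apply lam (L h) - b"
        unfolding h_def av_def using adjoint_vec_inner[of "DG xs" lam a]
        by (simp add: inner_add_right inner_commute blinfun.minus_right)
    qed
    ultimately show False using ab(1) by simp
  qed
  then obtain u n where un: "u \<in> P" "n \<in> NA" "0 = u + av + n" unfolding S1_def by blast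
  define c where "c = norm lam"
  define y where "y = (if lam = 0 then 0 else (1 / c) *\<^sub>R lam)"
  have cy: "c *\<^sub>R y = lam" unfolding y_def c_def by auto
  have yN: "y \<in> Nset"
  proof (cases "lam = 0")
    case True then show ?thesis using Nset_0 unfolding y_def by simp
  next
    case False
    then have c: "c > 0" unfolding c_def by simp
    have "norm y \<le> 1" unfolding y_def c_def using False by simp
    moreover have "blinfun_apply y (k - y0) \<le> 0" if "k \<in> K" for k
    proof -
      have "blinfun_apply lam k \<le> 0" using lam(1) that unfolding polar_cone_def by auto
      then show ?thesis unfolding y_def using False c lam(2) by (simp add: blinfun.diff_right blinfun.scaleR_left divide_nonpos_pos)
    qed
    ultimately show ?thesis unfolding Nset_def by blast
  qed
  have "0 \<in> Sc c"
  proof -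
    have "u + c *\<^sub>R adjoint_vec (DG xs) y + n = u + av + n"
      unfolding av_def adjoint_vec_scale[symmetric] cy ..
    then show ?thesis using Sc_mem[OF un(1) yN un(2), of c] un(3) by simp
  qed
  moreover have "c \<ge> 0" unfolding c_def by simp
  ultimately show "\<exists>c\<ge>0. 0 \<in> Sc c" by blast
next
  assume "\<exists>c\<ge>0. 0 \<in> Sc c"
  then obtain c where c: "c \<ge> 0" "0 \<in> Sc c" by blast
  then obtain u y n where e: "0 = u + c *\<^sub>R adjoint_vec (DG xs) y + n" "u \<in> P" "y \<in> Nset" "n \<in> NA"
    unfolding Sc_iff by blast
  define lam where "lam = c *\<^sub>R y"
  have "lam \<in> polar_cone K" unfolding polar_cone_def lam_def
    using Nset_K[OF e(3)] c by (auto simp: blinfun.scaleR_left mult_nonneg_nonpos)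
  moreover have "blinfun_apply lam y0 = 0" unfolding lam_def using Nset_y0[OF e(3)] by (simp add: blinfun.scaleR_left)
  moreover have "dir_deriv (lagrangian f W G lam) xs h \<ge> 0" if h: "h \<in> TA" for h
  proof -
    have "0 = u \<bullet> h + c * blinfun_apply y (L h) + n \<bullet> h"
      using arg_cong[OF e(1), of "\<lambda>v. v \<bullet> h"] adjoint_vec_inner[of "DG xs" y h] by (simp add: inner_add_left)
    moreover have "u \<bullet> h \<le> M h" using P_le[OF e(2)] .
    moreover have "n \<bullet> h \<le> 0" using NA_le[OF e(4) h] .
    ultimately have "0 \<le> M h + c * blinfun_apply y (L h)" by linarith
    then show ?thesis unfolding dir_deriv_lagr lam_def by (simp add: blinfun.scaleR_left)
  qed
  ultimately show "\<exists>lam. is_lagrange_multiplier f W A G K xs lam"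
    unfolding is_lagrange_multiplier_def by blast
qed

end


context setting begin

lemma pen_xs: "penalty f W G K c xs = Fs"
  unfolding penalty_def using feas(2) by simp

lemma b_imp_c:
  assumes c: "c \<ge> 0" and int: "0 \<in> interior (Sc c)"
  shows "first_order_growth_on (penalty f W G K c) A xs"
proof -
  obtain r where r: "r > 0" "ball 0 r \<subseteq> Sc c" using int mem_interior by blast
  define e1 where "e1 = r / (4 * (1 + c))"
  have e1: "e1 > 0" unfolding e1_def using r c by simp
  have e1c: "(1 + c) * e1 = r / 4"
  proof -
    have "1 + c \<noteq> 0" "4 + 4 * c \<noteq> 0" using c by simp_all
    then show ?thesis unfolding e1_def by (simp add: field_simps)
  qed
  obtain d1 where d1: "d1 > 0" "\<And>x. norm (x - xs) < d1 \<Longrightarrow> \<bar>F x - Fs - M (x - xs)\<bar> \<le> e1 * norm (x - xs)"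
    using danskin[OF e1] by blast
  obtain d2 where d2: "d2 > 0" "\<And>x x'. norm (x - xs) < d2 \<Longrightarrow> norm (x' - xs) < d2 \<Longrightarrow>
           norm (G x' - G x - L (x' - x)) \<le> e1 * norm (x' - x)"
    using G_lin[OF e1] by blast
  define d where "d = min d1 d2"
  show ?thesis unfolding first_order_growth_on_def
  proof (intro exI[of _ "r/4"] conjI exI[of _ "ball xs d"] ballI)
    show "r / 4 > 0" using r by simp
    show "open (ball xs d)" by simp
    show "xs \<in> ball xs d" using d1 d2 unfolding d_def by simp
    fix x assume x: "x \<in> ball xs d \<inter> A"
    define k where "k = x - xs"
    have nk: "norm k < d1" "norm k < d2" using x unfolding k_def d_def by (auto simp: dist_norm norm_minus_commute)
    show "penalty f W G K c x \<ge> penalty f W G K c xs + r / 4 * norm (x - xs)"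
    proof (cases "k = 0")
      case True then show ?thesis unfolding k_def by simp
    next
      case False
      then have nk0: "norm k > 0" by simp
      define z where "z = (r / 2 / norm k) *\<^sub>R k"
      have "norm z = r / 2" unfolding z_def using nk0 r by simp
      then have "z \<in> Sc c" using r by (intro subsetD[OF r(2)]) simp
      then obtain u y n where e: "z = u + c *\<^sub>R adjoint_vec (DG xs) y + n" "u \<in> P" "y \<in> Nset" "n \<in> NA"
        unfolding Sc_iff by blast
      have zk: "z \<bullet> k = r / 2 * norm k" unfolding z_def using nk0 by (simp add: power2_norm_eq_inner[symmetric] power2_eq_square)
      have "z \<bullet> k = u \<bullet> k + c * blinfun_apply y (L k) + n \<bullet> k"
        unfolding e(1) using adjoint_vec_inner[of "DG xs" y k] by (simp add: inner_add_left)
      moreover have "u \<bullet> k \<le> M k" by (rule P_le[OF e(2)])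
      moreover have "n \<bullet> k \<le> 0" using NA_le[OF e(4) A_TA] x unfolding k_def by auto
      ultimately have key: "r / 2 * norm k \<le> M k + c * blinfun_apply y (L k)" using zk by linarith
      have Fx: "F x - Fs \<ge> M k - e1 * norm k" using d1(2)[of x] nk unfolding k_def by simp
      have Gx: "norm (G x - y0 - L k) \<le> e1 * norm k" using d2(2)[of xs x] nk d2(1) unfolding k_def by simp
      have "blinfun_apply y (L k) - e1 * norm k \<le> blinfun_apply y (G x - y0)"
      proof -
        have "blinfun_apply y (G x - y0) = blinfun_apply y (L k) + blinfun_apply y (G x - y0 - L k)"
          by (simp add: blinfun.diff_right)
        moreover have "\<bar>blinfun_apply y (G x - y0 - L k)\<bar> \<le> e1 * norm k" using Nset_norm[OF e(3)] Gx order_trans by blast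
        ultimately show ?thesis by linarith
      qed
      also have "\<dots> \<le> infdist (G x) K" by (rule Nset_infdist[OF e(3)])
      finally have "c * (blinfun_apply y (L k) - e1 * norm k) \<le> c * infdist (G x) K" using c by (intro mult_left_mono) auto
      then have Id: "c * blinfun_apply y (L k) - c * (e1 * norm k) \<le> c * infdist (G x) K" by (simp add: right_diff_distrib)
      have "(1 + c) * e1 * norm k = r / 4 * norm k" using e1c by simp
      then have "e1 * norm k + c * (e1 * norm k) = r / 4 * norm k" by (simp add: algebra_simps)
      moreover have "r / 2 * norm k = r / 4 * norm k + r / 4 * norm k" by simp
      moreover have "c * infdist y0 K = 0" using feas(2) by simp
      ultimately show ?thesis using key Fx Id infdist_zero[OF feas(2)] unfolding penalty_def k_def by linarith
    qed
  qed
qed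

lemma c_imp_a:
  assumes c: "c \<ge> 0" and gr: "first_order_growth_on (penalty f W G K c) A xs"
  shows "\<forall>h \<in> TA - {0}. L h \<in> TK \<longrightarrow> M h > 0"
proof (intro ballI impI)
  fix h assume h: "h \<in> TA - {0}" and Lh: "L h \<in> TK"
  obtain \<rho> U where gU: "\<rho> > 0" "open U" "xs \<in> U" "\<And>y. y \<in> U \<inter> A \<Longrightarrow> penalty f W G K c y \<ge> penalty f W G K c xs + \<rho> * norm (y - xs)"
    using gr unfolding first_order_growth_on_def by blast
  show "M h > 0"
  proof (rule ccontr)
    assume "\<not> M h > 0"
    then have Mh: "M h \<le> 0" by simp
    obtain \<alpha> :: "nat \<Rightarrow> real" and hs where ah: "\<forall>n. \<alpha> n > 0" "\<alpha> \<longlonglongrightarrow> 0" "hs \<longlonglongrightarrow> h" "\<forall>n. xs + \<alpha> n *\<^sub>R hs n \<in> A"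
      using h unfolding contingent_cone_def by blast
    define nL where "nL = norm (DG xs)"
    define nh where "nh = norm h"
    have nh0: "nh > 0" using h unfolding nh_def by simp
    define Q where "Q = \<rho> + Bg + (nh + 1) * (1 + c) + c * (nL + 1)"
    have Q0: "Q > 0" unfolding Q_def using gU(1) Bg(1) c nh0 by (simp add: add_pos_nonneg nL_def)
    define e where "e = min 1 (\<rho> * nh / (2 * Q))"
    have e0: "e > 0" unfolding e_def using gU(1) nh0 Q0 by simp
    have e1: "e \<le> 1" unfolding e_def by simp
    have eQ: "e * Q \<le> \<rho> * nh / 2"
    proof -
      have "e \<le> \<rho> * nh / (2 * Q)" unfolding e_def by simp
      then have "e * Q \<le> \<rho> * nh / (2 * Q) * Q" using Q0 by (intro mult_right_mono) auto
      also have "\<dots> = \<rho> * nh / 2" using Q0 by simp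
      finally show ?thesis .
    qed
    obtain d1 where d1: "d1 > 0" "\<And>x. norm (x - xs) < d1 \<Longrightarrow> \<bar>F x - Fs - M (x - xs)\<bar> \<le> e * norm (x - xs)"
      using danskin[OF e0] by blast
    obtain d2 where d2: "d2 > 0" "\<And>x x'. norm (x - xs) < d2 \<Longrightarrow> norm (x' - xs) < d2 \<Longrightarrow>
           norm (G x' - G x - L (x' - x)) \<le> e * norm (x' - x)"
      using G_lin[OF e0] by blast
    obtain w where w: "w \<in> cone_of K y0" "dist w (L h) < e"
      using Lh e0 unfolding TK_eq closure_approachable by blast
    obtain \<tau> kk where wk: "w = \<tau> *\<^sub>R (kk - y0)" "0 \<le> \<tau>" "kk \<in> K" using w(1) unfolding cone_of_def by blast
    have ev1: "\<forall>\<^sub>F n in sequentially. \<alpha> n * (\<tau> + 1) < 1"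
    proof -
      have "(\<lambda>n. \<alpha> n * (\<tau> + 1)) \<longlonglongrightarrow> 0 * (\<tau> + 1)" by (intro tendsto_intros ah(2))
      then show ?thesis by (auto dest: order_tendstoD(2)[where a=1])
    qed
    have ev2: "\<forall>\<^sub>F n in sequentially. dist (hs n) h < e" using ah(3) e0 by (rule tendstoD)
    have lim0: "(\<lambda>n. \<alpha> n *\<^sub>R hs n) \<longlonglongrightarrow> 0"
      using tendsto_scaleR[OF ah(2) ah(3)] by simp
    have ev3: "\<forall>\<^sub>F n in sequentially. norm (\<alpha> n *\<^sub>R hs n) < min d1 d2"
      using tendstoD[OF lim0, of "min d1 d2"] d1(1) d2(1) by (simp add: dist_norm)
    have ev4: "\<forall>\<^sub>F n in sequentially. xs + \<alpha> n *\<^sub>R hs n \<in> U"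
    proof -
      have "(\<lambda>n. xs + \<alpha> n *\<^sub>R hs n) \<longlonglongrightarrow> xs + 0" by (intro tendsto_intros lim0)
      then show ?thesis using gU(2,3) by (auto dest: topological_tendstoD)
    qed
    obtain n where n: "\<alpha> n * (\<tau> + 1) < 1" "dist (hs n) h < e" "norm (\<alpha> n *\<^sub>R hs n) < min d1 d2" "xs + \<alpha> n *\<^sub>R hs n \<in> U"
      using eventually_happens'[OF trivial_limit_sequentially, of "\<lambda>n. \<alpha> n * (\<tau> + 1) < 1 \<and> dist (hs n) h < e \<and> norm (\<alpha> n *\<^sub>R hs n) < min d1 d2 \<and> xs + \<alpha> n *\<^sub>R hs n \<in> U"]
        ev1 ev2 ev3 ev4 by (auto simp: eventually_conj_iff)
    define t where "t = \<alpha> n"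
    define hn where "hn = hs n"
    define x where "x = xs + t *\<^sub>R hn"
    have t0: "t > 0" unfolding t_def using ah(1) by simp
    have xA: "x \<in> A" unfolding x_def t_def hn_def using ah(4) by simp
    have xU: "x \<in> U" unfolding x_def t_def hn_def using n(4) by simp
    have nx: "norm (x - xs) < d1" "norm (x - xs) < d2" using n(3) unfolding x_def t_def hn_def by auto
    have hd: "norm (hn - h) < e" using n(2) unfolding hn_def by (simp add: dist_norm)
    define N where "N = norm hn"
    have N1: "N \<le> nh + 1" and N2: "nh - e \<le> N"
      using hd e1 norm_triangle_ineq2[of hn h] norm_triangle_ineq3[of hn h] unfolding N_def nh_def
      by (auto simp: norm_minus_commute)
    have growth: "penalty f W G K c x \<ge> Fs + \<rho> * (t * N)"
      using gU(4)[of x] xA xU t0 unfolding pen_xs x_def N_def by simp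
    have Fx: "F x - Fs \<le> t * (Bg * e + e * N)"
    proof -
      have "F x - Fs \<le> M (t *\<^sub>R hn) + e * (t * N)" using d1(2)[OF nx(1)] t0 unfolding x_def N_def by simp
      also have "M (t *\<^sub>R hn) = t * M hn" using M_scale t0 by simp
      also have "M hn \<le> M h + Bg * norm (hn - h)" by (rule M_lip)
      finally have "F x - Fs \<le> t * (M h + Bg * norm (hn - h)) + e * (t * N)" using t0 by (simp add: mult_left_mono)
      moreover have "Bg * norm (hn - h) \<le> Bg * e" using hd Bg(1) by simp
      ultimately have "F x - Fs \<le> t * (Bg * e) + e * (t * N)" using Mh t0
        by (smt (verit, best) mult_left_mono)
      then show ?thesis by (simp add: algebra_simps)
    qed
    have inK: "y0 + t *\<^sub>R w \<in> K"
    proof -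
      have l: "t * \<tau> \<le> 1" using n(1) wk(2) t0 unfolding t_def by (smt (verit) mult_left_mono)
      have "y0 + t *\<^sub>R w = (1 - t * \<tau>) *\<^sub>R y0 + (t * \<tau>) *\<^sub>R kk" unfolding wk(1) by (simp add: algebra_simps)
      also have "\<dots> \<in> K" using K(3) feas(2) wk(3) l t0 wk(2) by (intro convexD) auto
      finally show ?thesis .
    qed
    have Id: "infdist (G x) K \<le> t * (e * N + nL * e + e)"
    proof -
      have "infdist (G x) K \<le> dist (G x) (y0 + t *\<^sub>R w)" by (rule infdist_le[OF inK])
      also have "\<dots> = norm ((G x - y0 - L (x - xs)) + t *\<^sub>R L (hn - h) + t *\<^sub>R (L h - w))"
        unfolding dist_norm x_def by (simp add: blinfun.scaleR_right blinfun.diff_right algebra_simps)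
      also have "\<dots> \<le> norm (G x - y0 - L (x - xs)) + norm (t *\<^sub>R L (hn - h)) + norm (t *\<^sub>R (L h - w))"
        by (rule norm_triangle_le[OF add_mono[OF norm_triangle_ineq order_refl]])
      also have "norm (G x - y0 - L (x - xs)) \<le> e * (t * N)" using d2(2)[OF _ nx(2), of xs] d2(1) t0 unfolding x_def N_def by simp
      also have "norm (t *\<^sub>R L (hn - h)) \<le> t * (nL * e)"
      proof -
        have "norm (L (hn - h)) \<le> nL * norm (hn - h)" unfolding nL_def by (rule norm_blinfun)
        also have "\<dots> \<le> nL * e" using hd unfolding nL_def by (intro mult_left_mono) auto
        finally show ?thesis using t0 by (simp add: mult_left_mono)
      qed
      also have "norm (t *\<^sub>R (L h - w)) \<le> t * e" using w(2) t0 by (simp add: dist_norm norm_minus_commute)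
      finally show ?thesis by (simp add: algebra_simps)
    qed
    have "\<rho> * (t * N) \<le> t * (Bg * e + e * N) + c * (t * (e * N + nL * e + e))"
    proof -
      have "penalty f W G K c x = F x + c * infdist (G x) K" unfolding penalty_def ..
      moreover have "c * infdist (G x) K \<le> c * (t * (e * N + nL * e + e))" using Id c by (rule mult_left_mono)
      ultimately show ?thesis using growth Fx by linarith
    qed
    then have "t * (\<rho> * N) \<le> t * (Bg * e + e * N + c * (e * N + nL * e + e))" by (simp add: algebra_simps)
    then have main: "\<rho> * N \<le> Bg * e + e * N + c * (e * N + nL * e + e)" using t0 by simp
    have "\<rho> * nh - \<rho> * e \<le> \<rho> * N" using N2 gU(1) by (simp add: right_diff_distrib[symmetric])
    moreover have "e * N \<le> e * (nh + 1)" using N1 e0 by simp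
    moreover have "c * (e * N) \<le> c * (e * (nh + 1))" using N1 e0 c by (simp add: mult_left_mono)
    ultimately have "\<rho> * nh \<le> \<rho> * e + Bg * e + e * (nh + 1) + c * (e * (nh + 1)) + c * (nL * e) + c * e"
      using main by (simp add: algebra_simps)
    also have "\<dots> = e * Q" unfolding Q_def by (simp add: algebra_simps)
    finally have "\<rho> * nh \<le> \<rho> * nh / 2" using eQ by simp
    then show False using gU(1) nh0 by simp
  qed
qed

end


context setting begin

definition sN :: "'a \<Rightarrow> real" where "sN h = (SUP y\<in>Nset. blinfun_apply y (L h))"

lemma sN_bdd: "bdd_above ((\<lambda>y. blinfun_apply y (L h)) ` Nset)"
  by (rule bdd_aboveI2[where M="norm (L h)"]) (use Nset_norm in \<open>force simp: abs_le_iff\<close>)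

lemma sN_upper: "y \<in> Nset \<Longrightarrow> blinfun_apply y (L h) \<le> sN h"
  unfolding sN_def by (rule cSUP_upper[OF _ sN_bdd])

lemma sN_least: "(\<And>y. y \<in> Nset \<Longrightarrow> blinfun_apply y (L h) \<le> c) \<Longrightarrow> sN h \<le> c"
  unfolding sN_def using Nset_0 by (intro cSUP_least) auto

lemma sN_approx: "e > 0 \<Longrightarrow> \<exists>y\<in>Nset. sN h - e < blinfun_apply y (L h)"
  unfolding sN_def using Nset_0 sN_bdd by (subst less_cSUP_iff[symmetric]) auto

lemma sN_nonneg: "0 \<le> sN h" using sN_upper[OF Nset_0, of h] by simp

lemma sN_lip: "sN h \<le> sN h' + norm (DG xs) * norm (h - h')"
proof (rule sN_least)
  fix y assume y: "y \<in> Nset"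
  have "blinfun_apply y (L h) = blinfun_apply y (L h') + blinfun_apply y (L (h - h'))"
    by (simp add: blinfun.diff_right)
  also have "\<dots> \<le> sN h' + norm (DG xs) * norm (h - h')"
  proof -
    have "blinfun_apply y (L (h - h')) \<le> norm (L (h - h'))" using Nset_norm[OF y] by (simp add: abs_le_iff)
    also have "\<dots> \<le> norm (DG xs) * norm (h - h')" by (rule norm_blinfun)
    finally show ?thesis using sN_upper[OF y, of h'] by simp
  qed
  finally show "blinfun_apply y (L h) \<le> sN h' + norm (DG xs) * norm (h - h')" .
qed

lemma sN_cont: "continuous_on S sN"
proof (rule continuous_on_subset[of UNIV], unfold continuous_on_iff, intro ballI allI impI)
  fix x and e :: real assume e: "e > 0"
  define B where "B = norm (DG xs) + 1"
  have B: "B > 0" unfolding B_def by (simp add: add_nonneg_pos)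
  show "\<exists>d>0. \<forall>x'\<in>UNIV. dist x' x < d \<longrightarrow> dist (sN x') (sN x) < e"
  proof (intro exI[of _ "e / B"] conjI ballI impI)
    fix x' assume "dist x' x < e / B"
    then have "B * norm (x' - x) < e" using B by (simp add: dist_norm field_simps)
    moreover have "norm (DG xs) * norm (x' - x) \<le> B * norm (x' - x)" unfolding B_def by (simp add: mult_right_mono)
    moreover have "sN x' \<le> sN x + norm (DG xs) * norm (x' - x)" by (rule sN_lip)
    moreover have "sN x \<le> sN x' + norm (DG xs) * norm (x' - x)" using sN_lip[of x x'] by (simp add: norm_minus_commute)
    ultimately show "dist (sN x') (sN x) < e" by (simp add: dist_real_def abs_less_iff)
  qed (use e B in auto)
qed auto

lemma sN_pos:
  assumes "L h \<notin> TK" shows "sN h > 0"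
proof -
  let ?C = "cone_of K y0"
  have "\<exists>y::'b \<Rightarrow>\<^sub>L real. norm y \<le> 1 \<and> (\<forall>c\<in>?C. blinfun_apply y c \<le> 0) \<and> blinfun_apply y (L h) > 0"
  proof (rule hb_cone_sep)
    show "0 \<in> ?C" by (rule cone_of_0[OF feas(2)])
    show "\<And>x y. x \<in> ?C \<Longrightarrow> y \<in> ?C \<Longrightarrow> x + y \<in> ?C" using cone_of_add[OF K(3) _ _ feas(2)] by blast
    show "\<And>t x. 0 \<le> t \<Longrightarrow> x \<in> ?C \<Longrightarrow> t *\<^sub>R x \<in> ?C" using cone_of_scale by blast
    show "L h \<notin> closure ?C" using assms TK_eq by simp
  qed
  then obtain y :: "'b \<Rightarrow>\<^sub>L real" where y: "norm y \<le> 1" "\<forall>c\<in>?C. blinfun_apply y c \<le> 0" "blinfun_apply y (L h) > 0"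
    by blast
  have "y \<in> Nset" unfolding Nset_def using y(1) y(2) cone_of_mem[of _ K 1 y0] by auto
  then show ?thesis using sN_upper[of y h] y(3) by simp
qed

lemma a_imp_b:
  assumes a: "\<forall>h \<in> TA - {0}. L h \<in> TK \<longrightarrow> M h > 0"
  shows "\<exists>c\<ge>0. 0 \<in> interior (Sc c)"
proof -
  define S where "S = TA \<inter> sphere 0 1"
  have cS: "compact S" unfolding S_def using TA_closed by (intro closed_Int_compact compact_sphere)
  define Ob where "Ob n = {h. 0 < M h + real n * sN h}" for n :: nat
  have oO: "open (Ob n)" for n unfolding Ob_def
    by (rule open_Collect_less) (intro continuous_intros M_cont sN_cont)+
  have cov: "S \<subseteq> (\<Union>n\<in>UNIV. Ob n)"
  proof
    fix h assume hS: "h \<in> S"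
    then have h: "h \<in> TA - {0}" unfolding S_def by auto
    show "h \<in> (\<Union>n\<in>UNIV. Ob n)"
    proof (cases "L h \<in> TK")
      case True then have "M h > 0" using a h by blast
      then have "h \<in> Ob 0" unfolding Ob_def by simp
      then show ?thesis by blast
    next
      case False
      then have s: "sN h > 0" by (rule sN_pos)
      obtain n :: nat where n: "\<bar>M h\<bar> / sN h < real n" using reals_Archimedean2 by blast
      then have "\<bar>M h\<bar> < real n * sN h" using s by (simp add: divide_less_eq)
      then have "h \<in> Ob n" unfolding Ob_def by simp
      then show ?thesis by blast
    qed
  qed
  obtain N' where N': "N' \<subseteq> UNIV" "finite N'" "S \<subseteq> (\<Union>n\<in>N'. Ob n)"
    using compactE_image[OF cS, of UNIV Ob] oO cov by blast
  define n0 where "n0 = Max (insert 1 N')"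
  define c where "c = real n0"
  have c1: "c \<ge> 1" unfolding c_def n0_def using N'(2) by (simp add: Max_ge_iff)
  have phi: "0 < M h + c * sN h" if hS: "h \<in> S" for h
  proof -
    obtain m where m: "m \<in> N'" "h \<in> Ob m" using N'(3) hS by blast
    have "m \<le> n0" unfolding n0_def using N'(2) m(1) by simp
    then have "real m * sN h \<le> c * sN h" unfolding c_def using sN_nonneg by (intro mult_right_mono) auto
    then show ?thesis using m(2) unfolding Ob_def by simp
  qed
  obtain \<delta> where \<delta>: "\<delta> > 0" "\<And>h. h \<in> S \<Longrightarrow> 2 * \<delta> \<le> M h + c * sN h"
  proof (cases "S = {}")
    case True then show ?thesis using that[of 1] by simp
  next
    case False
    have "continuous_on S (\<lambda>h. M h + c * sN h)" by (intro continuous_intros M_cont sN_cont)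
    then obtain h0 where h0: "h0 \<in> S" "\<And>h. h \<in> S \<Longrightarrow> M h0 + c * sN h0 \<le> M h + c * sN h"
      using continuous_attains_inf[OF cS False] by blast
    show ?thesis
    proof (rule that[of "(M h0 + c * sN h0) / 2"])
      show "0 < (M h0 + c * sN h0) / 2" using phi[OF h0(1)] by simp
      fix h assume "h \<in> S"
      then show "2 * ((M h0 + c * sN h0) / 2) \<le> M h + c * sN h" using h0(2)[of h] by simp
    qed
  qed
  obtain u0 where u0: "u0 \<in> P" using P_ne by auto
  define x0 where "x0 = u0 + c *\<^sub>R adjoint_vec (DG xs) 0 + 0"
  have x0: "x0 \<in> Sc c" unfolding x0_def by (rule Sc_mem[OF u0 Nset_0 NA_0])
  have ball_sub: "ball 0 \<delta> \<subseteq> closure (Sc c)"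
  proof
    fix z :: 'a assume z: "z \<in> ball 0 \<delta>"
    show "z \<in> closure (Sc c)"
    proof (rule ccontr)
      assume nz: "z \<notin> closure (Sc c)"
      obtain a b where ab: "a \<bullet> z < b" "\<And>x. x \<in> closure (Sc c) \<Longrightarrow> b < a \<bullet> x"
        using separating_hyperplane_closed_point[OF convex_closure[OF Sc_convex] closed_closure nz] by blast
      have ab2: "b < a \<bullet> x" if "x \<in> Sc c" for x using ab(2) closure_subset that by blast
      have a0: "a \<noteq> 0" using ab(1) ab2[OF x0] by auto
      define h where "h = - (1 / norm a) *\<^sub>R a"
      have nh: "norm h = 1" unfolding h_def using a0 by simp
      have key: "x \<bullet> h < \<delta>" if "x \<in> Sc c" for x
      proof -
        have "a \<bullet> z < a \<bullet> x" using ab(1) ab2[OF that] by simp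
        then have "x \<bullet> h < z \<bullet> h" unfolding h_def using a0
          by (simp add: inner_commute divide_less_cancel)
        also have "z \<bullet> h \<le> norm z * norm h" using Cauchy_Schwarz_ineq2[of z h] by linarith
        also have "\<dots> < \<delta>" using z nh by simp
        finally show ?thesis .
      qed
      show False
      proof (cases "h \<in> TA")
        case True
        then have hS: "h \<in> S" unfolding S_def using nh by simp
        obtain \<omega> where \<omega>: "\<omega> \<in> Ws" "M h - \<delta>/2 < gf xs \<omega> \<bullet> h" using M_approx[of "\<delta>/2" h] \<delta>(1) by auto
        obtain y where y: "y \<in> Nset" "sN h - \<delta>/(2*c) < blinfun_apply y (L h)"
          using sN_approx[of "\<delta>/(2*c)" h] \<delta>(1) c1 by auto
        define x where "x = gf xs \<omega> + c *\<^sub>R adjoint_vec (DG xs) y + 0"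
        have xS: "x \<in> Sc c" unfolding x_def by (rule Sc_mem[OF P_mem[OF \<omega>(1)] y(1) NA_0])
        have "x \<bullet> h = gf xs \<omega> \<bullet> h + c * blinfun_apply y (L h)"
          unfolding x_def using adjoint_vec_inner[of "DG xs" y h] by (simp add: inner_add_left)
        moreover have "c * (sN h - \<delta>/(2*c)) < c * blinfun_apply y (L h)" using y(2) c1 by simp
        moreover have "c * (sN h - \<delta>/(2*c)) = c * sN h - \<delta>/2" using c1 by (simp add: field_simps)
        ultimately have "x \<bullet> h > M h + c * sN h - \<delta>" using \<omega>(2) by linarith
        then show False using key[OF xS] \<delta>(2)[OF hS] by linarith
      next
        case False
        then obtain n where n: "n \<in> NA" "n \<bullet> h > 0" using bipolar by blast
        define t where "t = max 0 ((\<delta> - x0 \<bullet> h) / (n \<bullet> h))"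
        have t0: "t \<ge> 0" unfolding t_def by simp
        have "u0 + c *\<^sub>R adjoint_vec (DG xs) 0 + t *\<^sub>R n \<in> Sc c" by (rule Sc_mem[OF u0 Nset_0 NA_sc[OF n(1) t0]])
        then have lt: "(x0 + t *\<^sub>R n) \<bullet> h < \<delta>" using key unfolding x0_def by simp
        have "(\<delta> - x0 \<bullet> h) / (n \<bullet> h) * (n \<bullet> h) = \<delta> - x0 \<bullet> h" using n(2) by simp
        then have "\<delta> - x0 \<bullet> h \<le> t * (n \<bullet> h)" unfolding t_def using n(2)
          by (metis max.cobounded2 mult_right_mono less_imp_le)
        then show False using lt by (simp add: inner_add_left)
      qed
    qed
  qed
  have "0 \<in> interior (closure (Sc c))"
    using interior_maximal[OF ball_sub open_ball] \<delta>(1) by auto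
  then have "0 \<in> interior (Sc c)" using convex_interior_closure[OF Sc_convex] by simp
  then show ?thesis using c1 by (intro exI[of _ c]) auto
qed

end


lemma geom_conv:
  fixes x :: "nat \<Rightarrow> 'c::banach"
  assumes "\<And>n. norm (x (Suc n) - x n) \<le> C * (1/2)^n"
  shows "\<exists>l. x \<longlonglongrightarrow> l"
proof -
  define g where "g n = x (Suc n) - x n" for n
  have sG: "summable (\<lambda>n. C * (1/2::real)^n)" by (intro summable_mult summable_geometric) simp
  have "\<exists>N. \<forall>n\<ge>N. norm (g n) \<le> C * (1/2)^n" using assms unfolding g_def by auto
  from summable_norm_comparison_test[OF this sG] have "summable (\<lambda>n. norm (g n))" .
  then have sg: "summable g" by (rule summable_norm_cancel)
  have xn: "x n = x 0 + (\<Sum>i<n. g i)" for n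
  proof -
    have "(\<Sum>i<n. g i) = x n - x 0" unfolding g_def by (rule sum_lessThan_telescope)
    then show ?thesis by (metis add.commute diff_add_cancel)
  qed
  have lim: "(\<lambda>n. x 0 + (\<Sum>i<n. g i)) \<longlonglongrightarrow> x 0 + suminf g" by (rule tendsto_add[OF tendsto_const summable_LIMSEQ[OF sg]])
  have xeq: "(\<lambda>n. x 0 + (\<Sum>i<n. g i)) = x" by (rule ext) (rule xn[symmetric])
  show ?thesis using lim unfolding xeq by blast
qed

context setting begin

definition "Cm m = (\<Union>u\<in>(\<lambda>a. L (a - xs)) ` (A \<inter> cball xs (real m)). \<Union>v\<in>(\<lambda>k. y0 - k) ` K. {u + v})"

lemma Cm_iff: "y \<in> Cm m \<longleftrightarrow> (\<exists>a\<in>A. \<exists>k\<in>K. y = L (a - xs) - (k - y0) \<and> norm (a - xs) \<le> real m)"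
  unfolding Cm_def by (auto simp: dist_norm norm_minus_commute algebra_simps)

lemma Cm_closed: "closed (Cm m)"
proof -
  have "compact ((\<lambda>a. L (a - xs)) ` (A \<inter> cball xs (real m)))"
    by (intro compact_continuous_image closed_Int_compact A(2) compact_cball
        continuous_on_compose2[OF linear_continuous_on[OF blinfun.bounded_linear_right]] continuous_intros) auto
  moreover have "closed ((\<lambda>k. y0 - k) ` K)"
  proof -
    have "(\<lambda>k. y0 - k) ` K = (+) y0 ` (uminus ` K)" by (auto simp: image_image)
    then show ?thesis using closed_translation[OF closed_negations[OF K(2)]] by simp
  qed
  ultimately show ?thesis unfolding Cm_def by (rule compact_closed_sums)
qed

lemma Cm_convex: "convex (Cm m)"
proof -
  have "convex ((\<lambda>a. L (a - xs)) ` (A \<inter> cball xs (real m)))"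
  proof -
    have "(\<lambda>a. L (a - xs)) ` (A \<inter> cball xs (real m)) = L ` ((\<lambda>a. a - xs) ` (A \<inter> cball xs (real m)))"
      by (auto simp: image_image)
    then show ?thesis
      using convex_linear_image[OF blinfun.bounded_linear_right[THEN bounded_linear.linear] convex_translation_subtract[OF convex_Int[OF A(3) convex_cball]]]
      by simp
  qed
  moreover have "convex ((\<lambda>k. y0 - k) ` K)"
  proof -
    have "(\<lambda>k. y0 - k) ` K = (+) y0 ` (uminus ` K)" by (auto simp: image_image)
    then show ?thesis using convex_translation[OF convex_negations[OF K(3)]] by simp
  qed
  ultimately show ?thesis unfolding Cm_def by (rule convex_sums)
qed

lemma Cm_mono: "m \<le> m' \<Longrightarrow> Cm m \<subseteq> Cm m'"
  unfolding Cm_iff by (force simp: Cm_iff)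

lemma rcq_open:
  assumes rcq: "robinson_cq A G DG K xs"
  shows "\<exists>r>0. \<exists>m. ball 0 r \<subseteq> Cm m"
proof -
  have "0 \<in> interior {y0 + L (a - xs) - k | a k. a \<in> A \<and> k \<in> K}"
    using rcq unfolding robinson_cq_def .
  then obtain r0 where r0: "r0 > 0" "ball 0 r0 \<subseteq> {y0 + L (a - xs) - k | a k. a \<in> A \<and> k \<in> K}"
    using mem_interior by blast
  have cov: "ball 0 r0 \<subseteq> \<Union>(range Cm)"
  proof
    fix y :: 'b assume "y \<in> ball 0 r0"
    then obtain a k where ak: "a \<in> A" "k \<in> K" "y = y0 + L (a - xs) - k" using r0(2) by blast
    obtain m :: nat where "norm (a - xs) \<le> real m" using real_arch_simple by blast
    then have "y \<in> Cm m" unfolding Cm_iff using ak by (intro bexI[OF _ ak(1)] bexI[OF _ ak(2)]) (auto simp: algebra_simps)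
    then show "y \<in> \<Union>(range Cm)" by blast
  qed
  have "\<exists>m. interior (Cm m) \<noteq> {}"
  proof (rule ccontr)
    assume "\<nexists>m. interior (Cm m) \<noteq> {}"
    then have e: "\<And>m. interior (Cm m) = {}" by blast
    have "euclidean interior_of \<Union>(range Cm) = {}"
    proof (rule Baire_category_alt)
      show "completely_metrizable_space (euclidean :: 'b topology) \<or> locally_compact_space (euclidean :: 'b topology) \<and> regular_space (euclidean :: 'b topology)"
        using completely_metrizable_space_euclidean by blast
      show "countable (range Cm)" by simp
      fix T assume "T \<in> range Cm"
      then show "closedin euclidean T \<and> euclidean interior_of T = {}"
        using Cm_closed e closed_closedin by auto
    qed
    then have "interior (\<Union>(range Cm)) = {}" by simp
    moreover have "ball 0 r0 \<subseteq> interior (\<Union>(range Cm))" using cov by (intro interior_maximal) auto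
    ultimately show False using r0(1) by auto
  qed
  then obtain m p where "p \<in> interior (Cm m)" by blast
  then obtain s where s: "s > 0" "ball p s \<subseteq> Cm m" using mem_interior by blast
  define t where "t = r0 / (2 * (norm p + 1))"
  have t: "t > 0" unfolding t_def using r0(1) by (simp add: add_nonneg_pos)
  have "norm (- t *\<^sub>R p) < r0"
  proof -
    have "norm (- t *\<^sub>R p) = t * norm p" using t by simp
    also have "\<dots> < t * (norm p + 1)" using t by simp
    also have "\<dots> = r0 / 2"
    proof -
      have "0 < norm p + 1" by (simp add: add_nonneg_pos)
      then have "norm p + 1 \<noteq> 0" "2 * norm p + 2 \<noteq> 0" by linarith+
      then show ?thesis unfolding t_def by (simp add: field_simps)
    qed
    finally show ?thesis using r0(1) by simp
  qed
  then have "- t *\<^sub>R p \<in> ball 0 r0" by (simp only: mem_ball dist_0_norm)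
  then have "- t *\<^sub>R p \<in> \<Union>(range Cm)" using cov by (rule subsetD[rotated])
  then obtain j where j: "- t *\<^sub>R p \<in> Cm j" by blast
  define J where "J = max m j"
  have pJ: "ball p s \<subseteq> Cm J" using s(2) Cm_mono[of m J] unfolding J_def by auto
  have tpJ: "- t *\<^sub>R p \<in> Cm J" using j Cm_mono[of j J] unfolding J_def by auto
  define r where "r = t * s / (1 + t)"
  have r: "r > 0" unfolding r_def using t s by simp
  have "ball 0 r \<subseteq> Cm J"
  proof
    fix z :: 'b assume z: "z \<in> ball 0 r"
    define q where "q = p + ((1 + t) / t) *\<^sub>R z"
    have "norm (((1 + t) / t) *\<^sub>R z) < s"
    proof -
      have "norm z < t * s / (1 + t)" using z unfolding r_def by simp
      then have "(1 + t) / t * norm z < s" using t by (simp add: field_simps)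
      then show ?thesis using t by simp
    qed
    then have "q \<in> Cm J" using pJ unfolding q_def by (auto simp: dist_norm)
    have tt: "1 + t \<noteq> 0" "t + t * t \<noteq> 0" "t \<noteq> 0" using t by (simp_all add: add_pos_pos) (smt (verit) mult_pos_pos)
    have "z = (1 / (1 + t)) *\<^sub>R (- t *\<^sub>R p) + (t / (1 + t)) *\<^sub>R q"
      unfolding q_def using tt by (simp add: algebra_simps divide_simps)
    also have "\<dots> \<in> Cm J" using Cm_convex tpJ \<open>q \<in> Cm J\<close> t
      by (intro convexD) (auto simp: divide_simps)
    finally show "z \<in> Cm J" .
  qed
  then show ?thesis using r by blast
qed

end


context setting begin

abbreviation "nL \<equiv> norm (DG xs)"

lemma shift:
  assumes rcq: "robinson_cq A G DG K xs"
  shows "\<exists>r1>0. \<exists>\<delta>1>0. \<exists>\<kappa>1>0. \<forall>x\<in>A. \<forall>k\<in>K. norm (x - xs) < \<delta>1 \<longrightarrow> norm (k - y0) < \<delta>1 \<longrightarrow>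
     (\<forall>y. norm y \<le> r1 \<longrightarrow> (\<exists>x'\<in>A. \<exists>k'\<in>K. L (x' - x) - (k' - k) = y \<and> norm (x' - x) \<le> \<kappa>1 * norm y))"
proof -
  obtain r m where r: "r > 0" "ball 0 r \<subseteq> Cm m" using rcq_open[OF rcq] by blast
  define \<delta>1 where "\<delta>1 = r / (4 * (nL + 1))"
  have \<delta>1: "\<delta>1 > 0" unfolding \<delta>1_def using r by (simp add: add_nonneg_pos)
  have \<delta>1': "(nL + 1) * \<delta>1 = r / 4"
  proof -
    have "nL + 1 > 0" by (simp add: add_nonneg_pos)
    then have "nL + 1 \<noteq> 0" "4 * nL + 4 \<noteq> 0" by linarith+
    then show ?thesis unfolding \<delta>1_def by (simp add: field_simps)
  qed
  define \<kappa>1 where "\<kappa>1 = 4 * (real m + \<delta>1) / r"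
  have \<kappa>1: "\<kappa>1 > 0" unfolding \<kappa>1_def using r \<delta>1 by simp
  have r4: "r / 4 > 0" using r by simp
  have "\<forall>x\<in>A. \<forall>k\<in>K. norm (x - xs) < \<delta>1 \<longrightarrow> norm (k - y0) < \<delta>1 \<longrightarrow>
     (\<forall>y. norm y \<le> r / 4 \<longrightarrow> (\<exists>x'\<in>A. \<exists>k'\<in>K. L (x' - x) - (k' - k) = y \<and> norm (x' - x) \<le> \<kappa>1 * norm y))"
  proof (intro ballI impI allI)
    fix x k y assume x: "x \<in> A" and k: "k \<in> K" and nx: "norm (x - xs) < \<delta>1" and nk: "norm (k - y0) < \<delta>1"
      and ny: "norm (y::'b) \<le> r / 4"
    show "\<exists>x'\<in>A. \<exists>k'\<in>K. L (x' - x) - (k' - k) = y \<and> norm (x' - x) \<le> \<kappa>1 * norm y"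
    proof (cases "y = 0")
      case True then show ?thesis using x k by (intro bexI[OF _ x] bexI[OF _ k]) simp
    next
      case False
      define lam where "lam = 4 * norm y / r"
      have lam0: "lam > 0" unfolding lam_def using False r by simp
      have lam1: "lam \<le> 1" unfolding lam_def using ny r by simp
      define w where "w = L (x - xs) - (k - y0)"
      have nw: "norm w < r / 2"
      proof -
        have "norm w \<le> norm (L (x - xs)) + norm (k - y0)" unfolding w_def by (rule norm_triangle_ineq4)
        also have "norm (L (x - xs)) \<le> nL * norm (x - xs)" by (rule norm_blinfun)
        also have "nL * norm (x - xs) \<le> nL * \<delta>1" using nx by (intro mult_left_mono) auto
        finally have "norm w < nL * \<delta>1 + \<delta>1" using nk by simp
        also have "\<dots> = r / 4" using \<delta>1' by (simp add: algebra_simps)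
        finally show ?thesis using r by simp
      qed
      define tg where "tg = (1 / lam) *\<^sub>R y + w"
      have n1: "norm ((1 / lam) *\<^sub>R y) = r / 4" unfolding lam_def using False r by simp
      have "norm tg < r" unfolding tg_def using n1 nw norm_triangle_ineq[of "(1 / lam) *\<^sub>R y" w] r by linarith
      then have "tg \<in> Cm m" using r(2) by auto
      then obtain a kk where ak: "a \<in> A" "kk \<in> K" "tg = L (a - xs) - (kk - y0)" "norm (a - xs) \<le> real m"
        unfolding Cm_iff by blast
      define x' where "x' = (1 - lam) *\<^sub>R x + lam *\<^sub>R a"
      define k' where "k' = (1 - lam) *\<^sub>R k + lam *\<^sub>R kk"
      have x'A: "x' \<in> A" unfolding x'_def using A(3) x ak(1) lam0 lam1 by (intro convexD) auto
      have k'K: "k' \<in> K" unfolding k'_def using K(3) k ak(2) lam0 lam1 by (intro convexD) auto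
      have x'x: "x' - x = lam *\<^sub>R (a - x)" unfolding x'_def by (simp add: algebra_simps)
      have k'k: "k' - k = lam *\<^sub>R (kk - k)" unfolding k'_def by (simp add: algebra_simps)
      have "L (x' - x) - (k' - k) = lam *\<^sub>R L (a - x) - lam *\<^sub>R (kk - k)"
        unfolding x'x k'k blinfun.scaleR_right ..
      also have "\<dots> = lam *\<^sub>R (L (a - x) - (kk - k))" by (simp only: scaleR_diff_right)
      also have "lam *\<^sub>R (L (a - x) - (kk - k)) = lam *\<^sub>R (tg - w)"
        unfolding ak(3) w_def by (simp add: blinfun.diff_right algebra_simps)
      also have "lam *\<^sub>R (tg - w) = y" unfolding tg_def using lam0 by simp
      finally have eq: "L (x' - x) - (k' - k) = y" .
      have "norm (x' - x) = lam * norm (a - x)" unfolding x'x using lam0 by simp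
      also have "\<dots> \<le> lam * (real m + \<delta>1)"
      proof -
        have "norm (a - x) \<le> norm (a - xs) + norm (x - xs)"
          using norm_triangle_ineq4[of "a - xs" "x - xs"] by simp
        then show ?thesis using ak(4) nx lam0 by (intro mult_left_mono) auto
      qed
      also have "\<dots> = \<kappa>1 * norm y" unfolding lam_def \<kappa>1_def by simp
      finally show ?thesis using x'A k'K eq by blast
    qed
  qed
  then show ?thesis using r4 \<delta>1 \<kappa>1 by blast
qed


lemma tri: "norm (a - c) \<le> norm (a - b) + norm (b - (c::'c::real_normed_vector))"
  using norm_triangle_ineq[of "a - b" "b - c"] by simp

lemma G_cont: "continuous_on S G"
  using G_diff by (meson continuous_at_imp_continuous_on has_derivative_continuous)

lemma regularity:
  assumes rcq: "robinson_cq A G DG K xs"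
  shows "\<exists>\<kappa>>0. \<exists>\<delta>>0. \<forall>x0\<in>A. norm (x0 - xs) < \<delta> \<longrightarrow> (\<exists>z\<in>A. G z \<in> K \<and> norm (z - x0) \<le> \<kappa> * infdist (G x0) K)"
proof -
  obtain r1 \<delta>1 \<kappa>1 where pos: "r1 > 0" "\<delta>1 > 0" "\<kappa>1 > 0" and SH: "\<And>x k y. x \<in> A \<Longrightarrow> k \<in> K \<Longrightarrow> norm (x - xs) < \<delta>1 \<Longrightarrow> norm (k - y0) < \<delta>1 \<Longrightarrow>
     norm y \<le> r1 \<Longrightarrow> (\<exists>x'\<in>A. \<exists>k'\<in>K. L (x' - x) - (k' - k) = y \<and> norm (x' - x) \<le> \<kappa>1 * norm y)"
    using shift[OF rcq] by metis
  define \<epsilon> where "\<epsilon> = 1 / (2 * \<kappa>1)"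
  have \<epsilon>: "\<epsilon> > 0" "\<epsilon> * \<kappa>1 = 1/2" unfolding \<epsilon>_def using pos by auto
  obtain d2 where d2: "d2 > 0" "\<And>x x'. norm (x - xs) < d2 \<Longrightarrow> norm (x' - xs) < d2 \<Longrightarrow>
           norm (G x' - G x - L (x' - x)) \<le> \<epsilon> * norm (x' - x)"
    using G_lin[OF \<epsilon>(1)] by blast
  define R where "R = min \<delta>1 d2"
  have R: "R > 0" "R \<le> \<delta>1" "R \<le> d2" unfolding R_def using pos d2 by auto
  define \<kappa>1' where "\<kappa>1' = nL * \<kappa>1 + 1"
  have \<kappa>1': "\<kappa>1' > 0" unfolding \<kappa>1'_def using pos by (simp add: add_nonneg_pos)
  define \<eta> where "\<eta> = min (r1/2) (min (R / (8 * \<kappa>1 + 2)) (\<delta>1 / (4 * \<kappa>1' + 4)))"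
  have p1: "8 * \<kappa>1 + 2 > 0" "4 * \<kappa>1' + 4 > 0" using pos \<kappa>1' by auto
  have h1: "\<eta> \<le> r1/2" "\<eta> \<le> R / (8 * \<kappa>1 + 2)" "\<eta> \<le> \<delta>1 / (4 * \<kappa>1' + 4)" unfolding \<eta>_def by (meson min.cobounded1 min.cobounded2 order_trans)+
  have \<eta>: "\<eta> > 0" "2 * \<eta> \<le> r1" "\<eta> * (8 * \<kappa>1 + 2) \<le> R" "\<eta> * (4 * \<kappa>1' + 4) \<le> \<delta>1"
  proof -
    show "\<eta> > 0" unfolding \<eta>_def using p1 pos R by auto
    show "2 * \<eta> \<le> r1" using h1(1) by simp
    show "\<eta> * (8 * \<kappa>1 + 2) \<le> R" using h1(2) p1(1) by (simp add: pos_le_divide_eq)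
    show "\<eta> * (4 * \<kappa>1' + 4) \<le> \<delta>1" using h1(3) p1(2) by (simp add: pos_le_divide_eq)
  qed
  have "isCont G xs" using G_cont[of UNIV] by (simp add: continuous_on_eq_continuous_at)
  then obtain \<delta>G where \<delta>G: "\<delta>G > 0" "\<And>x. dist x xs < \<delta>G \<Longrightarrow> dist (G x) y0 < \<eta>"
    using \<eta>(1) unfolding continuous_at_eps_delta by blast
  define \<delta> where "\<delta> = min \<delta>G (R/2)"
  have \<delta>: "\<delta> > 0" "\<delta> \<le> \<delta>G" "\<delta> \<le> R/2" unfolding \<delta>_def using \<delta>G R by auto
  have main: "\<exists>z\<in>A. G z \<in> K \<and> norm (z - x0) \<le> (4 * \<kappa>1) * infdist (G x0) K"
    if x0: "x0 \<in> A" "norm (x0 - xs) < \<delta>" for x0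
  proof -
    define e0 where "e0 = infdist (G x0) K"
    have e0: "0 \<le> e0" unfolding e0_def by (rule infdist_nonneg)
    have nG0: "norm (G x0 - y0) < \<eta>" using \<delta>G(2)[of x0] x0 \<delta> by (simp add: dist_norm)
    have e0\<eta>: "e0 < \<eta>" using infdist_le[OF feas(2), of "G x0"] nG0 unfolding e0_def by (simp add: dist_norm)
    show ?thesis
    proof (cases "e0 = 0")
      case True
      then have "G x0 \<in> K" using in_closed_iff_infdist_zero[OF K(2) K(1)] unfolding e0_def by simp
      then show ?thesis using x0 by (intro bexI[of _ x0]) auto
    next
      case False
      then have e0p: "e0 > 0" using e0 by simp
      obtain k0 where k0: "k0 \<in> K" "dist (G x0) k0 < 2 * e0"
        using infdist_lessE[of "G x0" K "2 * e0"] K(1) e0p unfolding e0_def by auto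
      define Q where "Q p p' \<longleftrightarrow> fst p' \<in> A \<and> snd p' \<in> K \<and> L (fst p' - fst p) - (snd p' - snd p) = - (G (fst p) - snd p)
          \<and> norm (fst p' - fst p) \<le> \<kappa>1 * norm (G (fst p) - snd p)" for p p'
      define S where "S p = (SOME p'. Q p p')" for p
      define sq where "sq n = (S ^^ n) (x0, k0)" for n
      define xn where "xn n = fst (sq n)" for n
      define kn where "kn n = snd (sq n)" for n
      define q where "q n = (1/2::real) ^ n" for n
      have q: "0 < q n" "q n \<le> 1" "q (Suc n) = q n / 2" for n unfolding q_def by (auto simp: power_le_one)
      have sqS: "sq (Suc n) = S (sq n)" for n unfolding sq_def by simp
      define Inv where "Inv n \<longleftrightarrow> xn n \<in> A \<and> kn n \<in> K \<and> norm (G (xn n) - kn n) \<le> 2 * e0 * q n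
          \<and> norm (xn n - x0) \<le> 4 * \<kappa>1 * e0 * (1 - q n) \<and> norm (kn n - k0) \<le> 4 * \<kappa>1' * e0 * (1 - q n)" for n
      have near: "norm (xn n - xs) < R" "norm (kn n - y0) < \<delta>1" "norm (G (xn n) - kn n) \<le> r1" if I: "Inv n" for n
      proof -
        have a: "4 * \<kappa>1 * e0 * (1 - q n) \<le> 4 * \<kappa>1 * \<eta>"
        proof -
          have "4 * \<kappa>1 * e0 * (1 - q n) \<le> 4 * \<kappa>1 * e0 * 1" using q[of n] pos e0 by (intro mult_left_mono) auto
          also have "\<dots> \<le> 4 * \<kappa>1 * \<eta>" using e0\<eta> pos by simp
          finally show ?thesis .
        qed
        have "norm (xn n - xs) \<le> norm (xn n - x0) + norm (x0 - xs)" by (rule tri)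
        also have "\<dots> < 4 * \<kappa>1 * \<eta> + R / 2" using I a x0(2) \<delta>(3) unfolding Inv_def by linarith
        also have "\<dots> \<le> R"
        proof -
          have "4 * \<kappa>1 * \<eta> = 4 * (\<eta> * \<kappa>1)" "\<eta> * (8 * \<kappa>1 + 2) = 8 * (\<eta> * \<kappa>1) + 2 * \<eta>"
            by (simp_all add: algebra_simps)
          then show ?thesis using \<eta>(1,3) by linarith
        qed
        finally show "norm (xn n - xs) < R" .
        have b: "4 * \<kappa>1' * e0 * (1 - q n) \<le> 4 * \<kappa>1' * \<eta>"
        proof -
          have "4 * \<kappa>1' * e0 * (1 - q n) \<le> 4 * \<kappa>1' * e0 * 1" using q[of n] \<kappa>1' e0 by (intro mult_left_mono) auto
          also have "\<dots> \<le> 4 * \<kappa>1' * \<eta>" using e0\<eta> \<kappa>1' by simp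
          finally show ?thesis .
        qed
        have "norm (kn n - y0) \<le> norm (kn n - k0) + norm (k0 - G x0) + norm (G x0 - y0)"
          using tri[of "kn n" y0 k0] tri[of k0 y0 "G x0"] by linarith
        also have "\<dots> < 4 * \<kappa>1' * \<eta> + 2 * \<eta> + \<eta>"
          using I b k0(2) e0\<eta> nG0 unfolding Inv_def by (simp add: dist_norm norm_minus_commute)
        also have "\<dots> \<le> \<delta>1" using \<eta>(1,4) by (simp add: algebra_simps)
        finally show "norm (kn n - y0) < \<delta>1" .
        have "2 * e0 * q n \<le> 2 * e0" using q[of n] e0 by (simp add: mult_left_le)
        then show "norm (G (xn n) - kn n) \<le> r1" using I \<eta>(2) e0\<eta> unfolding Inv_def by linarith
      qed
      have step: "Inv (Suc n) \<and> Q (sq n) (sq (Suc n))" if I: "Inv n" for n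
      proof -
        have ex: "\<exists>p'. Q (sq n) p'"
        proof -
          have "xn n \<in> A" "kn n \<in> K" using I unfolding Inv_def by auto
          moreover have "norm (- (G (xn n) - kn n)) \<le> r1" using near(3)[OF I] by (simp only: norm_minus_cancel)
          ultimately have "\<exists>x'\<in>A. \<exists>k'\<in>K. L (x' - xn n) - (k' - kn n) = - (G (xn n) - kn n) \<and> norm (x' - xn n) \<le> \<kappa>1 * norm (- (G (xn n) - kn n))"
            using SH[of "xn n" "kn n" "- (G (xn n) - kn n)"] near(1)[OF I] R(2) near(2)[OF I] by auto
          then obtain x' k' where "x' \<in> A" "k' \<in> K" "L (x' - xn n) - (k' - kn n) = - (G (xn n) - kn n)"
            "norm (x' - xn n) \<le> \<kappa>1 * norm (G (xn n) - kn n)" by (auto simp only: norm_minus_cancel)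
          then have "Q (sq n) (x', k')" unfolding Q_def xn_def kn_def by simp
          then show ?thesis by blast
        qed
        have Qn: "Q (sq n) (sq (Suc n))" unfolding sqS S_def using someI_ex[OF ex] .
        then have Qs: "xn (Suc n) \<in> A" "kn (Suc n) \<in> K"
          "L (xn (Suc n) - xn n) - (kn (Suc n) - kn n) = - (G (xn n) - kn n)"
          "norm (xn (Suc n) - xn n) \<le> \<kappa>1 * norm (G (xn n) - kn n)"
          unfolding Q_def xn_def kn_def by auto
        define res where "res = G (xn n) - kn n"
        have nres: "norm res \<le> 2 * e0 * q n" using I unfolding Inv_def res_def by simp
        have dx: "norm (xn (Suc n) - xn n) \<le> \<kappa>1 * (2 * e0 * q n)"
          using Qs(4) nres pos unfolding res_def by (smt (verit) mult_left_mono)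
        have "norm (xn (Suc n) - x0) \<le> norm (xn (Suc n) - xn n) + norm (xn n - x0)" by (rule tri)
        also have "\<dots> \<le> \<kappa>1 * (2 * e0 * q n) + 4 * \<kappa>1 * e0 * (1 - q n)" using dx I unfolding Inv_def by linarith
        also have "\<dots> = 4 * \<kappa>1 * e0 * (1 - q (Suc n))" using q(3)[of n] by (simp add: algebra_simps)
        finally have bx: "norm (xn (Suc n) - x0) \<le> 4 * \<kappa>1 * e0 * (1 - q (Suc n))" .
        have Inv1: "Inv (Suc n) \<Longrightarrow> True" by simp
        have nearS: "norm (xn (Suc n) - xs) < R"
        proof -
          have "4 * \<kappa>1 * e0 * (1 - q (Suc n)) \<le> 4 * \<kappa>1 * \<eta>"
          proof -
            have "4 * \<kappa>1 * e0 * (1 - q (Suc n)) \<le> 4 * \<kappa>1 * e0 * 1" using q[of "Suc n"] pos e0 by (intro mult_left_mono) auto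
            also have "\<dots> \<le> 4 * \<kappa>1 * \<eta>" using e0\<eta> pos by simp
            finally show ?thesis .
          qed
          moreover have "norm (xn (Suc n) - xs) \<le> norm (xn (Suc n) - x0) + norm (x0 - xs)" by (rule tri)
          moreover have "4 * \<kappa>1 * \<eta> = 4 * (\<eta> * \<kappa>1)" "\<eta> * (8 * \<kappa>1 + 2) = 8 * (\<eta> * \<kappa>1) + 2 * \<eta>"
            by (simp_all add: algebra_simps)
          ultimately show ?thesis using bx x0(2) \<delta>(3) \<eta>(1,3) by linarith
        qed
        have eqr: "G (xn (Suc n)) - kn (Suc n) = G (xn (Suc n)) - G (xn n) - L (xn (Suc n) - xn n)"
          using Qs(3) by (simp add: algebra_simps)
        have "norm (xn n - xs) < d2" "norm (xn (Suc n) - xs) < d2" using near(1)[OF I] nearS R(3) by linarith+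
        from d2(2)[OF this] have "norm (G (xn (Suc n)) - kn (Suc n)) \<le> \<epsilon> * norm (xn (Suc n) - xn n)"
          unfolding eqr .
        also have "\<dots> \<le> \<epsilon> * (\<kappa>1 * (2 * e0 * q n))" using dx \<epsilon>(1) by (intro mult_left_mono) auto
        also have "\<dots> = 2 * e0 * q (Suc n)" using \<epsilon>(2) q(3)[of n] by (simp add: algebra_simps)
        finally have br: "norm (G (xn (Suc n)) - kn (Suc n)) \<le> 2 * e0 * q (Suc n)" .
        have "kn (Suc n) - kn n = L (xn (Suc n) - xn n) + res" using Qs(3) unfolding res_def by (simp add: algebra_simps)
        then have "norm (kn (Suc n) - kn n) \<le> norm (L (xn (Suc n) - xn n)) + norm res" by (simp add: norm_triangle_ineq)
        also have "norm (L (xn (Suc n) - xn n)) \<le> nL * norm (xn (Suc n) - xn n)" by (rule norm_blinfun)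
        also have "nL * norm (xn (Suc n) - xn n) \<le> nL * (\<kappa>1 * (2 * e0 * q n))" using dx by (intro mult_left_mono) auto
        finally have dk: "norm (kn (Suc n) - kn n) \<le> \<kappa>1' * (2 * e0 * q n)" using nres unfolding \<kappa>1'_def by (simp add: algebra_simps)
        have "norm (kn (Suc n) - k0) \<le> norm (kn (Suc n) - kn n) + norm (kn n - k0)" by (rule tri)
        also have "\<dots> \<le> \<kappa>1' * (2 * e0 * q n) + 4 * \<kappa>1' * e0 * (1 - q n)" using dk I unfolding Inv_def by linarith
        also have "\<dots> = 4 * \<kappa>1' * e0 * (1 - q (Suc n))" using q(3)[of n] by (simp add: algebra_simps)
        finally have bk: "norm (kn (Suc n) - k0) \<le> 4 * \<kappa>1' * e0 * (1 - q (Suc n))" .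
        show ?thesis unfolding Inv_def using Qs(1,2) br bx bk Qn by blast
      qed
      have Inv0: "Inv 0" unfolding Inv_def xn_def kn_def sq_def q_def using x0(1) k0 by (simp add: dist_norm)
      have allI': "Inv n" for n by (induction n) (use Inv0 step in auto)
      have dxn: "norm (xn (Suc n) - xn n) \<le> (2 * \<kappa>1 * e0) * (1/2)^n" for n
      proof -
        have "Q (sq n) (sq (Suc n))" using step[OF allI'[of n]] by blast
        then have "norm (xn (Suc n) - xn n) \<le> \<kappa>1 * norm (G (xn n) - kn n)" unfolding Q_def xn_def kn_def by auto
        also have "\<dots> \<le> \<kappa>1 * (2 * e0 * q n)" using allI'[of n] pos unfolding Inv_def by (intro mult_left_mono) auto
        finally show ?thesis unfolding q_def by (simp add: algebra_simps)
      qed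
      have dkn: "norm (kn (Suc n) - kn n) \<le> (2 * \<kappa>1' * e0) * (1/2)^n" for n
      proof -
        have "Q (sq n) (sq (Suc n))" using step[OF allI'[of n]] by blast
        then have eq: "kn (Suc n) - kn n = L (xn (Suc n) - xn n) + (G (xn n) - kn n)"
          unfolding Q_def xn_def kn_def by (simp add: algebra_simps)
        have "norm (kn (Suc n) - kn n) \<le> norm (L (xn (Suc n) - xn n)) + norm (G (xn n) - kn n)"
          unfolding eq by (rule norm_triangle_ineq)
        also have "norm (L (xn (Suc n) - xn n)) \<le> nL * norm (xn (Suc n) - xn n)" by (rule norm_blinfun)
        also have "nL * norm (xn (Suc n) - xn n) \<le> nL * ((2 * \<kappa>1 * e0) * (1/2)^n)" using dxn by (intro mult_left_mono) auto
        also have "norm (G (xn n) - kn n) \<le> 2 * e0 * q n" using allI'[of n] unfolding Inv_def by simp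
        finally show ?thesis unfolding q_def \<kappa>1'_def by (simp add: algebra_simps)
      qed
      obtain z where z: "xn \<longlonglongrightarrow> z" using geom_conv[OF dxn] by blast
      obtain kz where kz: "kn \<longlonglongrightarrow> kz" using geom_conv[OF dkn] by blast
      have zA: "z \<in> A" using closed_sequentially[OF A(2) _ z] allI' unfolding Inv_def by blast
      have kzK: "kz \<in> K" using closed_sequentially[OF K(2) _ kz] allI' unfolding Inv_def by blast
      have "(\<lambda>n. G (xn n) - kn n) \<longlonglongrightarrow> G z - kz"
        using continuous_on_tendsto_compose[OF G_cont[of UNIV] z] kz by (intro tendsto_diff) auto
      moreover have "(\<lambda>n. G (xn n) - kn n) \<longlonglongrightarrow> 0"
      proof (rule Lim_null_comparison[where g="\<lambda>n. 2 * e0 * q n"])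
        show "\<forall>\<^sub>F n in sequentially. norm (G (xn n) - kn n) \<le> 2 * e0 * q n"
          using allI' unfolding Inv_def by simp
        show "(\<lambda>n. 2 * e0 * q n) \<longlonglongrightarrow> 0" unfolding q_def
          by (intro tendsto_mult_right_zero LIMSEQ_power_zero) simp
      qed
      ultimately have "G z - kz = 0" by (rule LIMSEQ_unique)
      then have GzK: "G z \<in> K" using kzK by simp
      have "norm (z - x0) \<le> 4 * \<kappa>1 * e0"
      proof (rule Lim_norm_ubound[OF trivial_limit_sequentially])
        show "(\<lambda>n. xn n - x0) \<longlonglongrightarrow> z - x0" using z by (intro tendsto_intros)
        show "\<forall>\<^sub>F n in sequentially. norm (xn n - x0) \<le> 4 * \<kappa>1 * e0"
        proof (intro always_eventually allI)
          fix n
          have "4 * \<kappa>1 * e0 * (1 - q n) \<le> 4 * \<kappa>1 * e0 * 1" using q[of n] pos e0 by (intro mult_left_mono) auto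
          then show "norm (xn n - x0) \<le> 4 * \<kappa>1 * e0" using allI'[of n] unfolding Inv_def by simp
        qed
      qed
      then show ?thesis using zA GzK unfolding e0_def by blast
    qed
  qed
  show ?thesis using main pos(3) \<delta>(1) by (intro exI[of _ "4 * \<kappa>1"] conjI exI[of _ \<delta>]) auto
qed

end


context setting begin

lemma F_lip: "\<exists>Lf\<ge>0. \<forall>x z. norm (x - xs) < 1 \<longrightarrow> norm (z - xs) < 1 \<longrightarrow> F x \<le> F z + Lf * norm (x - z)"
proof -
  have "compact ((\<lambda>p. gf (fst p) (snd p)) ` (cball xs 1 \<times> W))"
    by (intro compact_continuous_image compact_Times compact_cball W(2) continuous_on_subset[OF gf_cont]) auto
  then have "bounded ((\<lambda>p. gf (fst p) (snd p)) ` (cball xs 1 \<times> W))" by (rule compact_imp_bounded)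
  then obtain B where B0: "B > 0" and B1: "\<And>v. v \<in> (\<lambda>p. gf (fst p) (snd p)) ` (cball xs 1 \<times> W) \<Longrightarrow> norm v \<le> B"
    unfolding bounded_pos by blast
  have B: "B > 0" "\<And>p. p \<in> cball xs 1 \<times> W \<Longrightarrow> norm (gf (fst p) (snd p)) \<le> B"
    using B0 B1 imageI by blast+
  have fl: "\<bar>f x \<omega> - f z \<omega>\<bar> \<le> B * norm (x - z)" if "\<omega> \<in> W" "norm (x - xs) < 1" "norm (z - xs) < 1" for x z \<omega>
  proof -
    have "norm (f x \<omega> - f z \<omega>) \<le> B * norm (x - z)"
    proof (rule differentiable_bound[OF convex_ball])
      show "((\<lambda>y. f y \<omega>) has_derivative (\<lambda>h. gf y \<omega> \<bullet> h)) (at y within ball xs 1)" for y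
        using f_diff[OF that(1)] by (rule has_derivative_at_withinI)
      fix y assume "y \<in> ball xs 1"
      then have "norm (gf y \<omega>) \<le> B" using B(2)[of "(y, \<omega>)"] that(1) by (simp add: dist_norm norm_minus_commute)
      then show "onorm (\<lambda>h. gf y \<omega> \<bullet> h) \<le> B"
        by (intro onorm_le) (metis Cauchy_Schwarz_ineq2 mult_right_mono norm_ge_zero order_trans real_norm_def)
    qed (use that in \<open>auto simp: dist_norm norm_minus_commute\<close>)
    then show ?thesis by simp
  qed
  show ?thesis
  proof (intro exI[of _ B] conjI allI impI)
    show "0 \<le> B" using B by simp
    fix x z assume x: "norm (x - xs) < 1" and z: "norm (z - xs) < 1"
    show "F x \<le> F z + B * norm (x - z)"
    proof (rule F_le)
      fix \<omega> assume "\<omega> \<in> W"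
      then have "\<bar>f x \<omega> - f z \<omega>\<bar> \<le> B * norm (x - z)" "f z \<omega> \<le> F z" using fl[OF _ x z] f_le_F[of \<omega> z] by auto
      then show "f x \<omega> \<le> F z + B * norm (x - z)" by linarith
    qed
  qed
qed

lemma near_feasible:
  assumes rcq: "robinson_cq A G DG K xs"
  shows "\<exists>\<kappa>>0. \<forall>\<epsilon>>0. \<exists>\<rho>>0. \<forall>x\<in>A. norm (x - xs) < \<rho> \<longrightarrow>
     (\<exists>z\<in>A. G z \<in> K \<and> norm (z - x) \<le> \<kappa> * infdist (G x) K \<and> norm (z - xs) < \<epsilon> \<and> norm (x - xs) < \<epsilon>)"
proof -
  obtain \<kappa> \<delta> where k: "\<kappa> > 0" "\<delta> > 0" and reg: "\<And>x0. x0 \<in> A \<Longrightarrow> norm (x0 - xs) < \<delta> \<Longrightarrow>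
      \<exists>z\<in>A. G z \<in> K \<and> norm (z - x0) \<le> \<kappa> * infdist (G x0) K"
    using regularity[OF rcq] by blast
  have "\<exists>\<rho>>0. \<forall>x\<in>A. norm (x - xs) < \<rho> \<longrightarrow>
     (\<exists>z\<in>A. G z \<in> K \<and> norm (z - x) \<le> \<kappa> * infdist (G x) K \<and> norm (z - xs) < \<epsilon> \<and> norm (x - xs) < \<epsilon>)"
    if e: "\<epsilon> > 0" for \<epsilon>
  proof -
    have "isCont G xs" using G_cont[of UNIV] by (simp add: continuous_on_eq_continuous_at)
    then obtain \<delta>G where \<delta>G: "\<delta>G > 0" "\<And>x. dist x xs < \<delta>G \<Longrightarrow> dist (G x) y0 < \<epsilon> / (2 * \<kappa>)"
      using e k unfolding continuous_at_eps_delta by (metis divide_pos_pos mult_pos_pos zero_less_numeral)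
    define \<rho> where "\<rho> = min \<delta> (min \<delta>G (\<epsilon>/2))"
    have \<rho>: "\<rho> > 0" "\<rho> \<le> \<delta>" "\<rho> \<le> \<delta>G" "\<rho> \<le> \<epsilon>/2" unfolding \<rho>_def using k \<delta>G e by auto
    show ?thesis
    proof (intro exI[of _ \<rho>] conjI ballI impI \<rho>(1))
      fix x assume x: "x \<in> A" "norm (x - xs) < \<rho>"
      obtain z where z: "z \<in> A" "G z \<in> K" "norm (z - x) \<le> \<kappa> * infdist (G x) K" using reg[OF x(1)] x(2) \<rho> by force
      have "infdist (G x) K \<le> norm (G x - y0)" using infdist_le[OF feas(2), of "G x"] by (simp add: dist_norm)
      also have "\<dots> < \<epsilon> / (2 * \<kappa>)" using \<delta>G(2)[of x] x(2) \<rho> by (simp add: dist_norm)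
      finally have "\<kappa> * infdist (G x) K < \<kappa> * (\<epsilon> / (2 * \<kappa>))" by (rule mult_strict_left_mono[OF _ k(1)])
      also have "\<dots> = \<epsilon> / 2" using k by simp
      finally have zx: "norm (z - x) < \<epsilon> / 2" using z(3) by simp
      have "norm (z - xs) \<le> norm (z - x) + norm (x - xs)" by (rule tri)
      then have "norm (z - xs) < \<epsilon>" using zx x(2) \<rho>(4) by linarith
      moreover have "norm (x - xs) < \<epsilon>" using x(2) \<rho>(4) e by linarith
      ultimately show "\<exists>z\<in>A. G z \<in> K \<and> norm (z - x) \<le> \<kappa> * infdist (G x) K \<and> norm (z - xs) < \<epsilon> \<and> norm (x - xs) < \<epsilon>"
        using z by blast
    qed
  qed
  then show ?thesis using k(1) by blast
qed

lemma part3a: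
  assumes lm: "local_min_on F {x \<in> A. G x \<in> K} xs" and rcq: "robinson_cq A G DG K xs"
  shows "\<exists>cs\<ge>0. \<forall>c\<ge>cs. local_min_on (penalty f W G K c) A xs"
proof -
  obtain Lf where Lf: "Lf \<ge> 0" "\<And>x z. norm (x - xs) < 1 \<Longrightarrow> norm (z - xs) < 1 \<Longrightarrow> F x \<le> F z + Lf * norm (x - z)"
    using F_lip by blast
  obtain \<epsilon>0 where \<epsilon>0: "\<epsilon>0 > 0" "\<And>y. y \<in> {x \<in> A. G x \<in> K} \<inter> ball xs \<epsilon>0 \<Longrightarrow> F xs \<le> F y"
    using lm unfolding local_min_on_def by blast
  obtain \<kappa> where \<kappa>: "\<kappa> > 0" and nf: "\<And>\<epsilon>. \<epsilon> > 0 \<Longrightarrow> \<exists>\<rho>>0. \<forall>x\<in>A. norm (x - xs) < \<rho> \<longrightarrow>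
     (\<exists>z\<in>A. G z \<in> K \<and> norm (z - x) \<le> \<kappa> * infdist (G x) K \<and> norm (z - xs) < \<epsilon> \<and> norm (x - xs) < \<epsilon>)"
    using near_feasible[OF rcq] by blast
  obtain \<rho> where \<rho>: "\<rho> > 0" "\<And>x. x \<in> A \<Longrightarrow> norm (x - xs) < \<rho> \<Longrightarrow>
     (\<exists>z\<in>A. G z \<in> K \<and> norm (z - x) \<le> \<kappa> * infdist (G x) K \<and> norm (z - xs) < min \<epsilon>0 1 \<and> norm (x - xs) < min \<epsilon>0 1)"
    using nf[of "min \<epsilon>0 1"] \<epsilon>0(1) by auto
  show ?thesis
  proof (intro exI[of _ "Lf * \<kappa>"] conjI allI impI)
    show "0 \<le> Lf * \<kappa>" using Lf(1) \<kappa> by simp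
    fix c assume c: "Lf * \<kappa> \<le> c"
    show "local_min_on (penalty f W G K c) A xs" unfolding local_min_on_def
    proof (intro exI[of _ \<rho>] conjI ballI \<rho>(1))
      fix y assume y: "y \<in> A \<inter> ball xs \<rho>"
      then obtain z where z: "z \<in> A" "G z \<in> K" "norm (z - y) \<le> \<kappa> * infdist (G y) K" "norm (z - xs) < min \<epsilon>0 1"
        "norm (y - xs) < min \<epsilon>0 1"
        using \<rho>(2)[of y] by (auto simp: dist_norm norm_minus_commute)
      have "F xs \<le> F z" using \<epsilon>0(2)[of z] z by (auto simp: dist_norm norm_minus_commute)
      also have "F z \<le> F y + Lf * norm (z - y)" using Lf(2)[of z y] z by simp
      also have "Lf * norm (z - y) \<le> Lf * (\<kappa> * infdist (G y) K)" using z(3) Lf(1) by (rule mult_left_mono)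
      also have "\<dots> = (Lf * \<kappa>) * infdist (G y) K" by simp
      also have "\<dots> \<le> c * infdist (G y) K" using c infdist_nonneg by (rule mult_right_mono)
      finally show "penalty f W G K c xs \<le> penalty f W G K c y" unfolding penalty_def using feas(2) by simp
    qed
  qed
qed

lemma part3b:
  assumes rcq: "robinson_cq A G DG K xs"
  shows "first_order_growth_on F {x \<in> A. G x \<in> K} xs \<longleftrightarrow> (\<exists>c\<ge>0. first_order_growth_on (penalty f W G K c) A xs)"
proof
  assume "\<exists>c\<ge>0. first_order_growth_on (penalty f W G K c) A xs"
  then obtain c \<rho> U where g: "\<rho> > 0" "open U" "xs \<in> U" "\<And>y. y \<in> U \<inter> A \<Longrightarrow> penalty f W G K c y \<ge> penalty f W G K c xs + \<rho> * norm (y - xs)"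
    unfolding first_order_growth_on_def by blast
  show "first_order_growth_on F {x \<in> A. G x \<in> K} xs" unfolding first_order_growth_on_def
  proof (intro exI[of _ \<rho>] conjI exI[of _ U] ballI g(1-3))
    fix y assume y: "y \<in> U \<inter> {x \<in> A. G x \<in> K}"
    then have "penalty f W G K c y \<ge> Fs + \<rho> * norm (y - xs)" using g(4)[of y] pen_xs by auto
    then show "F y \<ge> F xs + \<rho> * norm (y - xs)" using y unfolding penalty_def by simp
  qed
next
  assume "first_order_growth_on F {x \<in> A. G x \<in> K} xs"
  then obtain \<rho> U where g: "\<rho> > 0" "open U" "xs \<in> U" "\<And>y. y \<in> U \<inter> {x \<in> A. G x \<in> K} \<Longrightarrow> F y \<ge> F xs + \<rho> * norm (y - xs)"
    unfolding first_order_growth_on_def by blast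
  obtain \<epsilon>0 where \<epsilon>0: "\<epsilon>0 > 0" "ball xs \<epsilon>0 \<subseteq> U" using g(2,3) open_contains_ball by blast
  obtain Lf where Lf: "Lf \<ge> 0" "\<And>x z. norm (x - xs) < 1 \<Longrightarrow> norm (z - xs) < 1 \<Longrightarrow> F x \<le> F z + Lf * norm (x - z)"
    using F_lip by blast
  obtain \<kappa> where \<kappa>: "\<kappa> > 0" and nf: "\<And>\<epsilon>. \<epsilon> > 0 \<Longrightarrow> \<exists>\<rho>>0. \<forall>x\<in>A. norm (x - xs) < \<rho> \<longrightarrow>
     (\<exists>z\<in>A. G z \<in> K \<and> norm (z - x) \<le> \<kappa> * infdist (G x) K \<and> norm (z - xs) < \<epsilon> \<and> norm (x - xs) < \<epsilon>)"
    using near_feasible[OF rcq] by blast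
  obtain \<rho>' where \<rho>': "\<rho>' > 0" "\<And>x. x \<in> A \<Longrightarrow> norm (x - xs) < \<rho>' \<Longrightarrow>
     (\<exists>z\<in>A. G z \<in> K \<and> norm (z - x) \<le> \<kappa> * infdist (G x) K \<and> norm (z - xs) < min \<epsilon>0 1 \<and> norm (x - xs) < min \<epsilon>0 1)"
    using nf[of "min \<epsilon>0 1"] \<epsilon>0(1) by auto
  define c where "c = (\<rho> + Lf) * \<kappa>"
  have c: "c \<ge> 0" unfolding c_def using g(1) Lf(1) \<kappa> by simp
  have "first_order_growth_on (penalty f W G K c) A xs" unfolding first_order_growth_on_def
  proof (intro exI[of _ \<rho>] conjI exI[of _ "ball xs \<rho>'"] ballI g(1))
    show "open (ball xs \<rho>')" by simp
    show "xs \<in> ball xs \<rho>'" using \<rho>'(1) by simp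
    fix y assume y: "y \<in> ball xs \<rho>' \<inter> A"
    then obtain z where z: "z \<in> A" "G z \<in> K" "norm (z - y) \<le> \<kappa> * infdist (G y) K" "norm (z - xs) < min \<epsilon>0 1"
        "norm (y - xs) < min \<epsilon>0 1"
      using \<rho>'(2)[of y] by (auto simp: dist_norm norm_minus_commute)
    have zU: "z \<in> U" using \<epsilon>0(2) z(4) by (auto simp: dist_norm norm_minus_commute)
    have Fz: "F z \<ge> Fs + \<rho> * norm (z - xs)" using g(4)[of z] zU z by auto
    have Fzy: "F z \<le> F y + Lf * norm (z - y)" using Lf(2)[of z y] z by simp
    have tr: "norm (y - xs) \<le> norm (y - z) + norm (z - xs)" by (rule tri)
    have "\<rho> * norm (y - xs) \<le> \<rho> * norm (z - y) + \<rho> * norm (z - xs)"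
      using mult_left_mono[OF tr, of \<rho>] g(1) by (simp add: norm_minus_commute algebra_simps)
    moreover have "(\<rho> + Lf) * norm (z - y) \<le> c * infdist (G y) K"
      unfolding c_def using mult_left_mono[OF z(3), of "\<rho> + Lf"] g(1) Lf(1) by (simp add: mult.assoc)
    ultimately show "penalty f W G K c y \<ge> penalty f W G K c xs + \<rho> * norm (y - xs)"
    proof -
      have "c * infdist y0 K = 0" using feas(2) by simp
      then show ?thesis unfolding penalty_def using Fz Fzy \<open>\<rho> * norm (y - xs) \<le> \<rho> * norm (z - y) + \<rho> * norm (z - xs)\<close>
        \<open>(\<rho> + Lf) * norm (z - y) \<le> c * infdist (G y) K\<close> by (simp only: distrib_right)
    qed
  qed
  then show "\<exists>c\<ge>0. first_order_growth_on (penalty f W G K c) A xs" using c by blast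
qed

end

theorem theorem5:
  fixes A :: "'a::euclidean_space set" and K :: "'b::banach set" and W :: "'w::t2_space set"
    and f :: "'a \<Rightarrow> 'w \<Rightarrow> real" and gf :: "'a \<Rightarrow> 'w \<Rightarrow> 'a"
    and G :: "'a \<Rightarrow> 'b" and DG :: "'a \<Rightarrow> ('a \<Rightarrow>\<^sub>L 'b)" and xs :: 'a
  assumes A: "A \<noteq> {}" "closed A" "convex A"
    and K: "K \<noteq> {}" "closed K" "convex K" "cone K"
    and W: "W \<noteq> {}" "compact W"
    and f_diff: "\<And>\<omega> x. \<omega> \<in> W \<Longrightarrow> ((\<lambda>x. f x \<omega>) has_derivative (\<lambda>h. gf x \<omega> \<bullet> h)) (at x)"
    and f_cont: "continuous_on (UNIV \<times> W) (\<lambda>p. f (fst p) (snd p))"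
    and gf_cont: "continuous_on (UNIV \<times> W) (\<lambda>p. gf (fst p) (snd p))"
    and G_diff: "\<And>x. (G has_derivative blinfun_apply (DG x)) (at x)"
    and DG_cont: "continuous_on UNIV DG"
    and feas: "xs \<in> A" "G xs \<in> K"
  defines "\<Omega> \<equiv> {x \<in> A. G x \<in> K}"
  shows
    "((\<exists>lam. is_lagrange_multiplier f W A G K xs lam) \<longleftrightarrow>
        (\<exists>c\<ge>0. 0 \<in> minkowski_sum (subdiff_penalty f gf W G DG K c xs) (normal_cone A xs)))
   \<and> (((\<forall>h \<in> contingent_cone A xs - {0}. blinfun_apply (DG xs) h \<in> contingent_cone K (G xs) \<longrightarrow>
          (SUP \<omega>\<in>active_set f W xs. gf xs \<omega> \<bullet> h) > 0)
        \<longleftrightarrow> (\<exists>c\<ge>0. 0 \<in> interior (minkowski_sum (subdiff_penalty f gf W G DG K c xs) (normal_cone A xs))))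
      \<and> ((\<exists>c\<ge>0. 0 \<in> interior (minkowski_sum (subdiff_penalty f gf W G DG K c xs) (normal_cone A xs)))
        \<longleftrightarrow> (\<exists>c\<ge>0. first_order_growth_on (penalty f W G K c) A xs)))
   \<and> ((local_min_on (maxfun f W) \<Omega> xs \<and> robinson_cq A G DG K xs \<longrightarrow>
         (\<exists>cs\<ge>0. \<forall>c\<ge>cs. local_min_on (penalty f W G K c) A xs))
      \<and> (robinson_cq A G DG K xs \<longrightarrow>
         (first_order_growth_on (maxfun f W) \<Omega> xs \<longleftrightarrow>
          (\<exists>c\<ge>0. first_order_growth_on (penalty f W G K c) A xs))))"
proof -
  interpret S: setting A K W f gf G DG xs
    by (rule setting.intro) (fact A K W f_diff f_cont gf_cont G_diff DG_cont feas)+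
  have cond_a: "(\<forall>h \<in> contingent_cone A xs - {0}. blinfun_apply (DG xs) h \<in> contingent_cone K (G xs) \<longrightarrow>
          (SUP \<omega>\<in>active_set f W xs. gf xs \<omega> \<bullet> h) > 0) \<longleftrightarrow>
      (\<forall>h \<in> contingent_cone A xs - {0}. blinfun_apply (DG xs) h \<in> contingent_cone K (G xs) \<longrightarrow> S.M h > 0)"
    unfolding S.M_def ..
  have ab: "(\<forall>h \<in> contingent_cone A xs - {0}. blinfun_apply (DG xs) h \<in> contingent_cone K (G xs) \<longrightarrow> S.M h > 0)
     \<longleftrightarrow> (\<exists>c\<ge>0. 0 \<in> interior (minkowski_sum (subdiff_penalty f gf W G DG K c xs) (normal_cone A xs)))"
  proof
    assume "\<forall>h \<in> contingent_cone A xs - {0}. blinfun_apply (DG xs) h \<in> contingent_cone K (G xs) \<longrightarrow> S.M h > 0"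
    then show "\<exists>c\<ge>0. 0 \<in> interior (minkowski_sum (subdiff_penalty f gf W G DG K c xs) (normal_cone A xs))"
      by (rule S.a_imp_b)
  next
    assume "\<exists>c\<ge>0. 0 \<in> interior (minkowski_sum (subdiff_penalty f gf W G DG K c xs) (normal_cone A xs))"
    then obtain c where "c \<ge> 0" "0 \<in> interior (minkowski_sum (subdiff_penalty f gf W G DG K c xs) (normal_cone A xs))" by blast
    then show "\<forall>h \<in> contingent_cone A xs - {0}. blinfun_apply (DG xs) h \<in> contingent_cone K (G xs) \<longrightarrow> S.M h > 0"
      using S.c_imp_a S.b_imp_c by blast
  qed
  have bc: "(\<exists>c\<ge>0. 0 \<in> interior (minkowski_sum (subdiff_penalty f gf W G DG K c xs) (normal_cone A xs)))
        \<longleftrightarrow> (\<exists>c\<ge>0. first_order_growth_on (penalty f W G K c) A xs)"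
  proof
    assume "\<exists>c\<ge>0. 0 \<in> interior (minkowski_sum (subdiff_penalty f gf W G DG K c xs) (normal_cone A xs))"
    then show "\<exists>c\<ge>0. first_order_growth_on (penalty f W G K c) A xs" using S.b_imp_c by blast
  next
    assume "\<exists>c\<ge>0. first_order_growth_on (penalty f W G K c) A xs"
    then obtain c where "c \<ge> 0" "first_order_growth_on (penalty f W G K c) A xs" by blast
    then have "\<forall>h \<in> contingent_cone A xs - {0}. blinfun_apply (DG xs) h \<in> contingent_cone K (G xs) \<longrightarrow> S.M h > 0"
      by (rule S.c_imp_a)
    then show "\<exists>c\<ge>0. 0 \<in> interior (minkowski_sum (subdiff_penalty f gf W G DG K c xs) (normal_cone A xs))"
      by (rule S.a_imp_b)
  qed
  show ?thesis
    unfolding \<Omega>_def cond_a ab bc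
    using S.part1 S.part3a S.part3b by blast
qed


end
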